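(* Let $K$ be a non-Archimedean locally compact field of characteristic $p>0$, and let $U=1+M_K$ be its group of 1-units. Let $\Lambda$ be the set of maps $f:U\to U$ that are locally analytic on $U$ and satisfy $f(uv)=f(u)f(v)$ for all $u,v\in U$; it is a group under pointwise multiplication. Then the map $(\mathbb{Z}_p,+)\to(\Lambda,\cdot)$, $y\mapsto (u\mapsto u^y)$, is an isomorphism of groups. In particular $(\Lambda,\cdot)\cong(\mathbb{Z}_p,+)$.
   Context: $K$ has ring of integers $R_K$ with maximal ideal $M_K$, constant field $\mathbb{F}$ of order $q$, and a uniformizer $\pi$, so $K=\mathbb{F}((\pi))$ and $U=1+\pi\mathbb{F}[[\pi]]$. The absolute value is $|x|=q^{-v(x)}$. For $\alpha\in R_K$ and $t>0$, $B_{\alpha,t}=\{u\in R_K: |u-\alpha|\le t\}$. A continuous function $f$ on a ball $B_{\alpha,t}$ with $t=|\rho|$ ($\rho\in R_K$) is analytic there if $f(u)=\sum_{n\ge0}c_n\left(\frac{u-\alpha}{\rho}\right)^n$ with $c_n\in K$, $c_n\to0$. A continuous function $f:U\to K$ is locally analytic if every $\alpha\in U$ has a ball $B_{\alpha,t_\alpha}\subset U$ ($t_\alpha>0$) on which $f$ is analytic. For $y\in\mathbb{Z}_p$ and $u=1+x\in U$, $u^y=\sum_{n\ge0}\binom{y}{n}x^n$ (the natural $\mathbb{Z}_p$-module structure on $U$). *)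

theory Defs
  imports "HOL-Computational_Algebra.Formal_Laurent_Series" "HOL-Algebra.Group"
begin

(* K = F((pi)) is modelled as the Laurent series 'a fls over a finite field 'a.
   The valuation is fls_subdegree; |x| <= q^(-N) iff  vge x N. *)
definition vge :: "'a::field fls \<Rightarrow> int \<Rightarrow> bool" where
  "vge x N \<longleftrightarrow> x = 0 \<or> N \<le> fls_subdegree x"

definition RK :: "'a::field fls set" where "RK = {x. vge x 0}"
definition MK :: "'a::field fls set" where "MK = {x. vge x 1}"
definition Uone :: "'a::field fls set" where "Uone = {u. u - 1 \<in> MK}"

definition tends0 :: "(nat \<Rightarrow> 'a::field fls) \<Rightarrow> bool" where
  "tends0 c \<longleftrightarrow> (\<forall>N. \<exists>M. \<forall>n\<ge>M. vge (c n) N)"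

definition series_conv :: "(nat \<Rightarrow> 'a::field fls) \<Rightarrow> 'a fls \<Rightarrow> bool" where
  "series_conv w s \<longleftrightarrow> (\<forall>N. \<exists>M. \<forall>m\<ge>M. vge ((\<Sum>n<m. w n) - s) N)"

definition cont_on_K :: "'a::field fls set \<Rightarrow> ('a fls \<Rightarrow> 'a fls) \<Rightarrow> bool" where
  "cont_on_K S f \<longleftrightarrow>
     (\<forall>x\<in>S. \<forall>N. \<exists>M. \<forall>y\<in>S. vge (y - x) M \<longrightarrow> vge (f y - f x) N)"

definition ballK :: "'a::field fls \<Rightarrow> 'a fls \<Rightarrow> 'a fls set" where
  "ballK \<alpha> \<rho> = {u \<in> RK. vge (u - \<alpha>) (fls_subdegree \<rho>)}"

definition analytic_on_ball :: "('a::field fls \<Rightarrow> 'a fls) \<Rightarrow> 'a fls \<Rightarrow> 'a fls \<Rightarrow> bool" where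
  "analytic_on_ball f \<alpha> \<rho> \<longleftrightarrow>
     (\<exists>c. tends0 c \<and> (\<forall>u\<in>ballK \<alpha> \<rho>. series_conv (\<lambda>n. c n * ((u - \<alpha>) / \<rho>) ^ n) (f u)))"

definition locally_analytic_U :: "('a::field fls \<Rightarrow> 'a fls) \<Rightarrow> bool" where
  "locally_analytic_U f \<longleftrightarrow> cont_on_K Uone f \<and>
     (\<forall>\<alpha>\<in>Uone. \<exists>\<rho>. \<rho> \<in> RK \<and> \<rho> \<noteq> 0 \<and> ballK \<alpha> \<rho> \<subseteq> Uone \<and> analytic_on_ball f \<alpha> \<rho>)"

definition Lambda_set :: "('a::field fls \<Rightarrow> 'a fls) set" where
  "Lambda_set = {f \<in> extensional Uone. f \<in> Uone \<rightarrow> Uone \<and> locally_analytic_U f \<and>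
                  (\<forall>u\<in>Uone. \<forall>v\<in>Uone. f (u * v) = f u * f v)}"

definition Lambda_grp :: "('a::field fls \<Rightarrow> 'a fls) monoid" where
  "Lambda_grp = \<lparr>carrier = Lambda_set,
                  mult = (\<lambda>f g. restrict (\<lambda>u. f u * g u) Uone),
                  one = restrict (\<lambda>u. 1) Uone\<rparr>"

(* Z_p as compatible sequences of residues y n \<in> {0..<p^n} *)
definition Zp :: "nat \<Rightarrow> (nat \<Rightarrow> int) set" where
  "Zp p = {y. \<forall>n. 0 \<le> y n \<and> y n < int p ^ n \<and> y (Suc n) mod (int p ^ n) = y n}"

definition Zp_grp :: "nat \<Rightarrow> (nat \<Rightarrow> int) monoid" where
  "Zp_grp p = \<lparr>carrier = Zp p,
               mult = (\<lambda>y z. \<lambda>n. (y n + z n) mod (int p ^ n)),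
               one = (\<lambda>n. 0)\<rparr>"

(* image in F_p \<subseteq> K of binom(y,n) \<in> Z_p: since p^(n+1) > n, binom(y,n) \<equiv> binom(y_(n+1),n) mod p *)
definition zp_binom :: "nat \<Rightarrow> (nat \<Rightarrow> int) \<Rightarrow> nat \<Rightarrow> 'a::field fls" where
  "zp_binom p y n = of_nat (nat (y (Suc n)) choose n)"

definition upow :: "nat \<Rightarrow> (nat \<Rightarrow> int) \<Rightarrow> 'a::field fls \<Rightarrow> 'a fls" where
  "upow p y u = (THE s. series_conv (\<lambda>n. zp_binom p y n * (u - 1) ^ n) s)"

end

theory Submission
  imports Defs
begin


lemma vge_iff: "vge (x::'a::field fls) N \<longleftrightarrow> (\<forall>k<N. fls_nth x k = 0)"
  unfolding vge_def
proof
  assume "x = 0 \<or> N \<le> fls_subdegree x" thus "\<forall>k<N. fls_nth x k = 0" by auto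
next
  assume H: "\<forall>k<N. fls_nth x k = 0"
  show "x = 0 \<or> N \<le> fls_subdegree x"
  proof (cases "x = 0")
    case False thus ?thesis using H fls_subdegree_geI by blast
  qed simp
qed

lemma vge_0[simp]: "vge 0 N" by (simp add: vge_def)

lemma vge_mono: "vge x N \<Longrightarrow> M \<le> N \<Longrightarrow> vge x M"
  by (auto simp: vge_def)

lemma vge_add: "vge (x::'a::field fls) N \<Longrightarrow> vge y N \<Longrightarrow> vge (x + y) N"
  by (simp add: vge_iff)

lemma vge_uminus[simp]: "vge (- (x::'a::field fls)) N \<longleftrightarrow> vge x N"
  by (simp add: vge_iff)

lemma vge_diff: "vge (x::'a::field fls) N \<Longrightarrow> vge y N \<Longrightarrow> vge (x - y) N"
  by (simp add: vge_iff)

lemma vge_sym: "vge ((x::'a::field fls) - y) N \<longleftrightarrow> vge (y - x) N"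
  by (metis minus_diff_eq vge_uminus)

lemma vge_trans: "vge ((x::'a::field fls) - y) N \<Longrightarrow> vge (y - z) N \<Longrightarrow> vge (x - z) N"
  using vge_add[of "x-y" N "y-z"] by simp

lemma vge_sum: "(\<And>i. i \<in> A \<Longrightarrow> vge (f i :: 'a::field fls) N) \<Longrightarrow> vge (sum f A) N"
  by (induction A rule: infinite_finite_induct) (auto intro: vge_add)

lemma vge_mult: "vge (x::'a::field fls) A \<Longrightarrow> vge y B \<Longrightarrow> vge (x * y) (A + B)"
  by (cases "x = 0"; cases "y = 0") (auto simp: vge_def)

lemma vge_mult0: "vge (x::'a::field fls) 0 \<Longrightarrow> vge y B \<Longrightarrow> vge (x * y) B"
  using vge_mult[of x 0 y B] by simp

lemma vge_mult0': "vge (x::'a::field fls) B \<Longrightarrow> vge y 0 \<Longrightarrow> vge (x * y) B"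
  using vge_mult[of x B y 0] by simp

lemma vge_power: "vge (x::'a::field fls) A \<Longrightarrow> vge (x ^ n) (int n * A)"
proof (induction n)
  case 0 thus ?case by (simp add: vge_def)
next
  case (Suc n)
  have "vge (x * x^n) (A + int n * A)" using vge_mult[OF Suc.prems Suc.IH[OF Suc.prems]] .
  thus ?case by (simp add: algebra_simps)
qed

lemma vge_power0: "vge (x::'a::field fls) 0 \<Longrightarrow> vge (x ^ n) 0"
  using vge_power[of x 0 n] by simp

lemma vge_power1: "vge (x::'a::field fls) 1 \<Longrightarrow> vge (x ^ n) (int n)"
  using vge_power[of x 1 n] by simp

lemma vge_all: "(\<And>N. vge (x::'a::field fls) N) \<Longrightarrow> x = 0"
proof (rule ccontr)
  assume H: "\<And>N. vge x N" "x \<noteq> 0"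
  hence "fls_subdegree x + 1 \<le> fls_subdegree x" using H(1)[of "fls_subdegree x + 1"]
    by (auto simp: vge_def)
  thus False by simp
qed

lemma vge_of_nat[simp]: "vge (of_nat k :: 'a::field fls) 0"
  by (simp add: vge_def)
lemma vge_of_int[simp]: "vge (of_int k :: 'a::field fls) 0"
  by (simp add: vge_def)
lemma vge_one[simp]: "vge (1 :: 'a::field fls) 0"
  by (simp add: vge_def)

lemma vge_X_power[simp]: "vge (fls_X ^ n :: 'a::field fls) (int n)"
  by (simp add: vge_def)

lemma vge_cancel: assumes "(a::'a::field fls) \<noteq> 0" "vge (a * y) N"
  shows "vge y (N - fls_subdegree a)"
  using assms by (cases "y = 0") (auto simp: vge_def)

lemma vge_cancel0: assumes "(a::'a::field fls) \<noteq> 0" "fls_subdegree a = 0" "vge (a * y) N"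
  shows "vge y N"
  using vge_cancel[OF assms(1,3)] assms(2) by simp

lemma vge_cancel_X: assumes "vge (fls_X ^ k * y :: 'a::field fls) N"
  shows "vge y (N - int k)"
  using vge_cancel[OF _ assms] by simp

lemma vge_le_subdegree: "(x::'a::field fls) \<noteq> 0 \<Longrightarrow> vge x N \<Longrightarrow> N \<le> fls_subdegree x"
  by (simp add: vge_def)

lemma not_vge_subdegree: "(x::'a::field fls) \<noteq> 0 \<Longrightarrow> \<not> vge x (fls_subdegree x + 1)"
  by (simp add: vge_def)

lemma Uone_iff: "u \<in> Uone \<longleftrightarrow> vge ((u::'a::field fls) - 1) 1"
  by (simp add: Uone_def MK_def)

lemma RK_iff: "u \<in> RK \<longleftrightarrow> vge (u::'a::field fls) 0"
  by (simp add: RK_def)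

lemma Uone_vge0: assumes "vge ((u::'a::field fls) - 1) 1" shows "vge u 0"
proof -
  have "vge ((u - 1) + 1) 0" by (rule vge_add) (auto intro: vge_mono[OF assms])
  thus ?thesis by simp
qed

lemma Uone_subdeg: assumes "vge ((u::'a::field fls) - 1) 1" shows "u \<noteq> 0" "fls_subdegree u = 0"
proof -
  have n0: "fls_nth (u - 1) 0 = 0" using assms by (simp add: vge_iff)
  hence u0: "fls_nth u 0 = 1" by simp
  thus "u \<noteq> 0" by auto
  have "vge u 0" using Uone_vge0[OF assms] .
  hence "0 \<le> fls_subdegree u" using \<open>u \<noteq> 0\<close> by (simp add: vge_def)
  moreover have "fls_subdegree u \<le> 0" using u0 by (intro fls_subdegree_leI) simp
  ultimately show "fls_subdegree u = 0" by simp
qed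

lemma vge_cancelU: assumes "vge ((a::'a::field fls) - 1) 1" "vge (a * y) N" shows "vge y N"
  using vge_cancel0[OF Uone_subdeg[OF assms(1)] assms(2)] .



locale cp =
  fixes p :: nat and ty :: "'a::field itself"
  assumes pr: "prime p" and ch: "of_nat p = (0::'a)"
begin

lemma CHAR_base: "CHAR('a) = p"
proof -
  have "CHAR('a) dvd p" using ch by (simp add: of_nat_eq_0_iff_char_dvd)
  moreover have "CHAR('a) \<noteq> 1" by simp
  ultimately show ?thesis using pr by (metis prime_nat_iff)
qed

lemma of_nat_fls_0_iff: "(of_nat n :: 'a fls) = 0 \<longleftrightarrow> p dvd n"
proof -
  have "(of_nat n :: 'a fls) = 0 \<longleftrightarrow> (of_nat n :: 'a) = 0"
    by (metis fls_const_0 fls_const_nonzero fls_of_nat)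
  thus ?thesis using CHAR_base of_nat_eq_0_iff_char_dvd by metis
qed

lemma CHAR_fls: "CHAR('a fls) = p"
  by (rule CHAR_eqI) (auto simp: of_nat_fls_0_iff)

lemma p_pos: "p > 0" using pr prime_gt_0_nat by blast
lemma p_ge2: "p \<ge> 2" using pr prime_ge_2_nat by blast

lemma frob: "((x::'a fls) + y) ^ (p ^ k) = x ^ (p ^ k) + y ^ (p ^ k)"
  using freshmans_dream'[of "p^k" k x y] CHAR_fls pr by simp

lemma frob_diff: "((x::'a fls) - y) ^ (p ^ k) = x ^ (p ^ k) - y ^ (p ^ k)"
  using frob[of "x - y" y k] by (simp add: algebra_simps)

lemma frob_sum: "(sum (f :: 'b \<Rightarrow> 'a fls) A) ^ (p ^ k) = sum (\<lambda>i. f i ^ (p ^ k)) A"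
  using freshmans_dream_sum'[of "p^k" k f A] CHAR_fls pr by simp

lemma frob1: "((x::'a fls) + y) ^ p = x ^ p + y ^ p"
  using frob[of x y 1] by simp

lemma frob1_diff: "((x::'a fls) - y) ^ p = x ^ p - y ^ p"
  using frob_diff[of x y 1] by simp

lemma frob1_sum: "(sum (f :: 'b \<Rightarrow> 'a fls) A) ^ p = sum (\<lambda>i. f i ^ p) A"
  using frob_sum[of f A 1] by simp

lemma of_nat_pow_p: "(of_nat k :: 'a fls) ^ p = of_nat k"
proof (induction k)
  case 0 thus ?case using p_pos by simp
next
  case (Suc k) thus ?case using frob1[of "of_nat k" 1] by (simp add: add.commute)
qed

lemma of_nat_inj: assumes "i < p" "j < p" "(of_nat i :: 'a fls) = of_nat j" shows "i = j"
proof (rule ccontr)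
  assume "i \<noteq> j"
  { fix i j :: nat assume ij: "i < j" "j < p" "(of_nat i :: 'a fls) = of_nat j"
    have "(of_nat (j - i) :: 'a fls) = 0" using ij by (simp add: of_nat_diff)
    hence "p dvd (j - i)" by (simp add: of_nat_fls_0_iff)
    moreover have "0 < j - i" "j - i < p" using ij by auto
    ultimately have False using nat_dvd_not_less by blast }
  thus False using assms \<open>i \<noteq> j\<close> by (metis linorder_neqE_nat)
qed

lemma of_nat_nz: assumes "\<not> p dvd k" shows "(of_nat k :: 'a fls) \<noteq> 0"
  using assms of_nat_fls_0_iff by blast

lemma of_nat_mod_p: "(of_nat (k mod p) :: 'a fls) = of_nat k"
proof -
  have "k = k mod p + p * (k div p)" by simp
  hence "(of_nat k :: 'a fls) = of_nat (k mod p) + of_nat p * of_nat (k div p)"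
    by (metis of_nat_add of_nat_mult)
  thus ?thesis using of_nat_fls_0_iff[of p] by simp
qed

end


lemma sum_tail_vge:
  fixes m m2 :: nat and w :: "nat \<Rightarrow> 'a::field fls"
  assumes "\<And>n. n \<ge> m \<Longrightarrow> vge (w n :: 'a::field fls) N" "m \<le> m2"
  shows "vge (sum w {..<m2} - sum w {..<m}) N"
proof -
  have "sum w {..<m2} = sum w {..<m} + sum w {m..<m2}"
    using assms(2) sum.atLeastLessThan_concat[of 0 m m2 w] by (simp add: atLeast0LessThan)
  moreover have "vge (sum w {m..<m2}) N" by (rule vge_sum) (use assms in auto)
  ultimately show ?thesis by simp
qed

lemma series_conv_unique:
  assumes "series_conv w (s::'a::field fls)" "series_conv w t" shows "s = t"
proof (rule vge_all[of "s - t", simplified])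
  fix N
  obtain M1 where M1: "\<forall>m\<ge>M1. vge (sum w {..<m} - s) N" using assms(1) unfolding series_conv_def by blast
  obtain M2 where M2: "\<forall>m\<ge>M2. vge (sum w {..<m} - t) N" using assms(2) unfolding series_conv_def by blast
  have "vge (sum w {..<max M1 M2} - s) N" "vge (sum w {..<max M1 M2} - t) N" using M1 M2 by auto
  hence "vge (s - sum w {..<max M1 M2}) N" using vge_sym by blast
  from vge_trans[OF this \<open>vge (sum w {..<max M1 M2} - t) N\<close>] show "vge (s - t) N" .
qed

lemma series_conv_the: "series_conv w s \<Longrightarrow> (THE s. series_conv w s) = (s::'a::field fls)"
  using series_conv_unique by blast

lemma tends0_lower_bound:
  assumes "tends0 (w :: nat \<Rightarrow> 'a::field fls)" shows "\<exists>L\<le>0. \<forall>n. vge (w n) L"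
proof -
  obtain M where M: "\<forall>n\<ge>M. vge (w n) 0" using assms unfolding tends0_def by blast
  define L where "L = min 0 (Min ((\<lambda>n. fls_subdegree (w n)) ` {..<M}))"
  have "vge (w n) L" for n
  proof (cases "n < M")
    case True
    hence "L \<le> fls_subdegree (w n)" unfolding L_def
      by (metis (no_types, lifting) Min_le finite_imageI finite_lessThan image_eqI lessThan_iff min.coboundedI2)
    thus ?thesis by (auto simp: vge_def)
  next
    case False thus ?thesis using M vge_mono[of "w n" 0 L] by (simp add: L_def)
  qed
  thus ?thesis unfolding L_def by (intro exI[of _ L]) (auto simp: L_def)
qed

lemma conv_exists:
  assumes T: "tends0 (w :: nat \<Rightarrow> 'a::field fls)" shows "\<exists>s. series_conv w s"
proof -
  define S where "S m = sum w {..<m}" for m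
  define M where "M N = (SOME M. \<forall>n\<ge>M. vge (w n) N)" for N
  have M: "\<forall>n\<ge>M N. vge (w n) N" for N
    unfolding M_def by (rule someI_ex) (use T in \<open>auto simp: tends0_def\<close>)
  obtain L where L: "L \<le> 0" "\<And>n. vge (w n) L" using tends0_lower_bound[OF T] by blast
  have SL: "vge (S m) L" for m unfolding S_def by (rule vge_sum) (use L in auto)
  define g where "g k = fls_nth (S (M (k+1))) k" for k
  have key: "fls_nth (S m) k = g k" if "m \<ge> M N" "k < N" for m k N
  proof -
    define m2 where "m2 = max m (M (k+1))"
    have "vge (S m2 - S m) N"
      unfolding S_def by (rule sum_tail_vge) (use M that in \<open>auto simp: m2_def\<close>)
    hence a: "fls_nth (S m2) k = fls_nth (S m) k" using that by (simp add: vge_iff)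
    have "vge (S m2 - S (M (k+1))) (k+1)"
      unfolding S_def by (rule sum_tail_vge) (use M that in \<open>auto simp: m2_def\<close>)
    hence b: "fls_nth (S m2) k = fls_nth (S (M (k+1))) k" by (simp add: vge_iff)
    show ?thesis using a b g_def by simp
  qed
  have gL: "g k = 0" if "k < L" for k
    using SL[of "M (k+1)"] that by (simp add: g_def vge_iff)
  have ev: "\<forall>\<^sub>\<infinity> n::nat. g (- int n) = 0"
    unfolding MOST_nat
  proof (intro exI[of _ "nat (- L)"] allI impI)
    fix n assume "nat (- L) < n" thus "g (- int n) = 0" using gL by simp
  qed
  define s where "s = Abs_fls g"
  have sn: "fls_nth s = g" unfolding s_def using ev by (simp add: Abs_fls_inverse)
  have "series_conv w s" unfolding series_conv_def
  proof
    fix N show "\<exists>Ma. \<forall>m\<ge>Ma. vge (sum w {..<m} - s) N"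
      by (intro exI[of _ "M N"] allI impI) (auto simp: vge_iff sn key[unfolded S_def])
  qed
  thus ?thesis by blast
qed

lemma series_conv_scale:
  assumes "series_conv w (s::'a::field fls)" shows "series_conv (\<lambda>n. a * w n) (a * s)"
  unfolding series_conv_def
proof
  fix N
  show "\<exists>M. \<forall>m\<ge>M. vge (sum (\<lambda>n. a * w n) {..<m} - a * s) N"
  proof (cases "a = 0")
    case True thus ?thesis by simp
  next
    case False
    obtain M where M: "\<forall>m\<ge>M. vge (sum w {..<m} - s) (N - fls_subdegree a)"
      using assms unfolding series_conv_def by blast
    { fix m assume "m \<ge> M"
      hence "vge (a * (sum w {..<m} - s)) (fls_subdegree a + (N - fls_subdegree a))"
        using M by (intro vge_mult) (auto simp: vge_def)
      hence "vge (sum (\<lambda>n. a * w n) {..<m} - a * s) N"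
        by (simp add: sum_distrib_left algebra_simps) }
    thus ?thesis by blast
  qed
qed

lemma series_conv_iff_trunc:
  assumes W: "\<And>n. vge (w n :: 'a::field fls) (int n)"
  shows "series_conv w s \<longleftrightarrow> (\<forall>N. vge (sum w {..<N} - s) (int N))"
proof
  assume C: "series_conv w s"
  show "\<forall>N. vge (sum w {..<N} - s) (int N)"
  proof
    fix N
    obtain M where M: "\<forall>m\<ge>M. vge (sum w {..<m} - s) (int N)" using C unfolding series_conv_def by blast
    have "vge (sum w {..<max M N} - sum w {..<N}) (int N)"
      by (rule sum_tail_vge) (auto intro: vge_mono[OF W])
    hence "vge (sum w {..<N} - sum w {..<max M N}) (int N)" using vge_sym by blast
    from vge_trans[OF this] M show "vge (sum w {..<N} - s) (int N)" by auto
  qed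
next
  assume H: "\<forall>N. vge (sum w {..<N} - s) (int N)"
  show "series_conv w s" unfolding series_conv_def
  proof
    fix N :: int
    show "\<exists>M. \<forall>m\<ge>M. vge (sum w {..<m} - s) N"
    proof (intro exI[of _ "nat N"] allI impI)
      fix m assume "nat N \<le> m"
      hence "N \<le> int m" by simp
      thus "vge (sum w {..<m} - s) N" using H vge_mono by blast
    qed
  qed
qed

lemma tends0_trunc:
  assumes W: "\<And>n. vge (w n :: 'a::field fls) (int n)" shows "tends0 w"
  unfolding tends0_def using W vge_mono by (metis nat_le_iff)

lemma conv_exists_trunc:
  assumes W: "\<And>n. vge (w n :: 'a::field fls) (int n)"
  shows "\<exists>s. \<forall>N. vge (sum w {..<N} - s) (int N)"
  using conv_exists[OF tends0_trunc[OF W]] series_conv_iff_trunc[OF W] by blast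

lemma trunc_unique:
  assumes "\<forall>N. vge (sum w {..<N} - s) (int N)" "\<forall>N. vge (sum w {..<N} - t) (int N)"
  shows "s = (t::'a::field fls)"
proof (rule vge_all[of "s - t", simplified])
  fix N :: int
  have "vge (sum w {..<nat N} - s) (int (nat N))" "vge (sum w {..<nat N} - t) (int (nat N))"
    using assms by blast+
  hence "vge (s - t) (int (nat N))" using vge_sym vge_trans by blast
  thus "vge (s - t) N" using vge_mono by fastforce
qed



lemma vge_X[simp]: "vge (fls_X :: 'a::field fls) 1"
  by (simp add: vge_def)

lemma one_plus_pow_vge:
  assumes "vge (z::'a::field fls) N" "N \<ge> 0" shows "vge ((1 + z) ^ c - 1) N"
proof (induction c)
  case 0 thus ?case by simp
next
  case (Suc c)
  have "(1 + z) ^ Suc c - 1 = (1 + z) * ((1 + z) ^ c - 1) + z" by (simp add: algebra_simps)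
  moreover have "vge ((1 + z) * ((1 + z) ^ c - 1)) N"
    by (rule vge_mult0[OF _ Suc.IH]) (intro vge_add, simp, rule vge_mono[OF assms])
  ultimately show ?case using vge_add assms(1) by metis
qed

lemma Uone_mult: "vge ((u::'a::field fls) - 1) 1 \<Longrightarrow> vge (v - 1) 1 \<Longrightarrow> vge (u * v - 1) 1"
proof -
  assume a: "vge (u - 1) 1" "vge (v - 1) 1"
  have "u * v - 1 = (u - 1) * (v - 1) + (u - 1) + (v - 1)" by (simp add: algebra_simps)
  moreover have "vge ((u - 1) * (v - 1)) 1" using vge_mult[OF a] vge_mono by fastforce
  ultimately show ?thesis using a vge_add by metis
qed

lemma Uone_pow: "vge ((u::'a::field fls) - 1) 1 \<Longrightarrow> vge (u ^ n - 1) 1"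
  by (induction n) (auto intro: Uone_mult[of u])

lemma mult_approx:
  assumes "vge ((A::'a::field fls) - a) N" "vge (B - b) N" "vge A 0" "vge b 0"
  shows "vge (A * B - a * b) N"
proof -
  have "A * B - a * b = A * (B - b) + (A - a) * b" by (simp add: algebra_simps)
  thus ?thesis using assms vge_mult0 vge_mult0' vge_add by metis
qed

lemma pow_approx:
  assumes "vge ((u::'a::field fls) - v) N" "vge u 0" "vge v 0" shows "vge (u ^ n - v ^ n) N"
proof (induction n)
  case 0 thus ?case by simp
next
  case (Suc n) thus ?case using mult_approx[OF assms(1) Suc.IH assms(2) vge_power0[OF assms(3)]] by simp
qed

lemma fls_nth_sum: "fls_nth (sum f A) k = (\<Sum>i\<in>A. fls_nth (f i) k)"
  by (induction A rule: infinite_finite_induct) auto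

lemma fls_nth_one_plus_X_pow:
  "fls_nth ((1 + fls_X) ^ m :: 'a::field fls) (int n) = of_nat (m choose n)"
proof -
  have "(1 + fls_X) ^ m = (\<Sum>i\<le>m. of_nat (m choose i) * (fls_X :: 'a fls) ^ i)"
    using binomial_ring[of "fls_X :: 'a fls" 1 m] by (simp add: add.commute)
  hence "fls_nth ((1 + fls_X) ^ m :: 'a fls) (int n) = (\<Sum>i\<le>m. of_nat (m choose i) * (if int n = int i then 1 else 0))"
    by (simp add: fls_nth_sum fls_of_nat)
  also have "\<dots> = (\<Sum>i\<le>m. if i = n then of_nat (m choose i) else 0)"
    by (intro sum.cong) auto
  also have "\<dots> = of_nat (m choose n)" by (simp add: binomial_eq_0)
  finally show ?thesis .
qed

context cp begin

lemma pow_period: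
  assumes "vge ((u::'a fls) - 1) 1" shows "vge (u ^ (a + p ^ k * c) - u ^ a) (int (p ^ k))"
proof -
  have "u ^ (p ^ k) = (u - 1) ^ (p ^ k) + 1"
    using frob[of "u - 1" 1 k] by simp
  have z: "vge ((u - 1) ^ (p ^ k)) (int (p ^ k))" using vge_power1[OF assms, of "p ^ k"] by simp
  have "vge ((1 + (u - 1) ^ (p ^ k)) ^ c - 1) (int (p ^ k))" by (rule one_plus_pow_vge[OF z]) simp
  hence c: "vge ((u ^ (p ^ k)) ^ c - 1) (int (p ^ k))" using \<open>u ^ (p ^ k) = _\<close> by (simp add: add.commute)
  have "u ^ (a + p ^ k * c) - u ^ a = u ^ a * ((u ^ (p ^ k)) ^ c - 1)"
    by (simp add: power_add power_mult right_diff_distrib)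
  thus ?thesis using vge_mult0[OF vge_power0[OF Uone_vge0[OF assms]] c] by simp
qed

lemma binom_congr:
  assumes "n < p ^ k" shows "(of_nat ((a + p ^ k * c) choose n) :: 'a fls) = of_nat (a choose n)"
proof -
  have X: "vge ((1 + fls_X :: 'a fls) - 1) 1" by simp
  have "vge ((1 + fls_X :: 'a fls) ^ (a + p ^ k * c) - (1 + fls_X) ^ a) (int (p ^ k))"
    by (rule pow_period[OF X])
  hence "fls_nth ((1 + fls_X :: 'a fls) ^ (a + p ^ k * c) - (1 + fls_X) ^ a) (int n) = 0"
    using assms by (simp add: vge_iff)
  hence "(of_nat ((a + p ^ k * c) choose n) :: 'a) = of_nat (a choose n)"
    by (simp add: fls_nth_one_plus_X_pow)
  thus ?thesis by (simp add: fls_of_nat)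
qed

end


lemma zp_mod: assumes "y \<in> Zp p" "n \<le> M" shows "y M mod int p ^ n = y n"
  using assms(2)
proof (induction M rule: dec_induct)
  case base thus ?case using assms(1) unfolding Zp_def by (simp add: mod_pos_pos_trivial)
next
  case (step M)
  have "y (Suc M) mod int p ^ n = (y (Suc M) mod int p ^ M) mod int p ^ n"
    using step.hyps by (simp add: mod_mod_cancel le_imp_power_dvd)
  also have "\<dots> = y M mod int p ^ n" using assms(1) unfolding Zp_def by simp
  finally show ?case using step.IH by simp
qed

lemma zp_nonneg: "y \<in> Zp p \<Longrightarrow> 0 \<le> y n" unfolding Zp_def by simp
lemma zp_less: "y \<in> Zp p \<Longrightarrow> y n < int p ^ n" unfolding Zp_def by simp

lemma zp_decomp: assumes "y \<in> Zp p" "n \<le> M"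
  shows "\<exists>c. nat (y M) = nat (y n) + p ^ n * c"
proof -
  have "y M = y M mod int p ^ n + int p ^ n * (y M div int p ^ n)" by simp
  hence e: "y M = y n + int p ^ n * (y M div int p ^ n)" using zp_mod[OF assms] by simp
  have "0 \<le> y M div int p ^ n" using zp_nonneg[OF assms(1), of M] by (simp add: div_int_pos_iff)
  hence "int (nat (y n) + p ^ n * nat (y M div int p ^ n)) = y M"
    using e zp_nonneg[OF assms(1), of n] by simp
  hence "nat (y M) = nat (y n) + p ^ n * nat (y M div int p ^ n)" by (metis nat_int)
  thus ?thesis by blast
qed

lemma pow_expand:
  assumes x: "vge (x::'a::field fls) 1"
  shows "vge ((1 + x) ^ m - (\<Sum>n<N. of_nat (m choose n) * x ^ n)) (int N)"
proof -
  define Q where "Q = m + N + 1"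
  have "(1 + x) ^ m = (\<Sum>n\<le>m. of_nat (m choose n) * x ^ n)"
    using binomial_ring[of x 1 m] by (simp add: add.commute)
  also have "\<dots> = (\<Sum>n<Q. of_nat (m choose n) * x ^ n)"
    by (rule sum.mono_neutral_left) (auto simp: Q_def binomial_eq_0)
  finally have e: "(1 + x) ^ m = (\<Sum>n<Q. of_nat (m choose n) * x ^ n)" .
  have "vge ((\<Sum>n<Q. of_nat (m choose n) * x ^ n) - (\<Sum>n<N. of_nat (m choose n) * x ^ n)) (int N)"
    by (rule sum_tail_vge) (auto simp: Q_def intro!: vge_mult0 vge_mono[OF vge_power1[OF x]])
  thus ?thesis using e by simp
qed

context cp begin

lemma n_le_pow: "n < p ^ n"
proof -
  have "n < 2 ^ n" by (rule less_exp)
  also have "(2::nat) ^ n \<le> p ^ n" using p_ge2 by (rule power_mono) simp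
  finally show ?thesis .
qed

lemma n_less_pow: "n < p ^ Suc n"
proof -
  have "p ^ n \<le> p ^ Suc n" using p_pos by simp
  thus ?thesis using n_le_pow[of n] by linarith
qed

lemma upow_approx:
  assumes y: "y \<in> Zp p" and u: "vge ((u::'a fls) - 1) 1"
  shows "vge (upow p y u - u ^ nat (y M)) (int M)"
proof -
  define x where "x = u - 1"
  have x: "vge x 1" using u x_def by simp
  define w where "w n = zp_binom p y n * x ^ n" for n
  have W: "vge (w n) (int n)" for n unfolding w_def zp_binom_def by (rule vge_mult0[OF vge_of_nat vge_power1[OF x]])
  obtain s where s: "\<forall>N. vge (sum w {..<N} - s) (int N)" using conv_exists_trunc[OF W] by blast
  have "series_conv w s" using s series_conv_iff_trunc[OF W] by blast
  hence "(THE s. series_conv w s) = s" by (rule series_conv_the)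
  moreover have "upow p y u = (THE s. series_conv w s)" unfolding upow_def w_def x_def ..
  ultimately have us: "upow p y u = s" by simp
  have "sum w {..<M} = (\<Sum>n<M. of_nat (nat (y M) choose n) * x ^ n)"
  proof (intro sum.cong refl)
    fix n assume "n \<in> {..<M}"
    hence "Suc n \<le> M" by simp
    then obtain c where c: "nat (y M) = nat (y (Suc n)) + p ^ Suc n * c" using zp_decomp[OF y] by blast
    have "n < p ^ Suc n" by (rule n_less_pow)
    hence "(of_nat (nat (y M) choose n) :: 'a fls) = of_nat (nat (y (Suc n)) choose n)"
      unfolding c by (rule binom_congr)
    thus "w n = of_nat (nat (y M) choose n) * x ^ n" unfolding w_def zp_binom_def by simp
  qed
  hence a: "vge (u ^ nat (y M) - sum w {..<M}) (int M)" using pow_expand[OF x, of "nat (y M)" M] x_def by simp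
  have b: "vge (sum w {..<M} - s) (int M)" using s by blast
  have "vge (u ^ nat (y M) - s) (int M)" by (rule vge_trans[OF a b])
  thus ?thesis unfolding us by (subst vge_sym)
qed

lemma upow_eqI:
  assumes y: "y \<in> Zp p" and u: "vge ((u::'a fls) - 1) 1"
    and H: "\<And>M. vge (s - u ^ nat (y M)) (int M)"
  shows "upow p y u = s"
proof -
  have "vge (upow p y u - s) N" for N
  proof -
    have "vge (upow p y u - s) (int (nat N))"
      using upow_approx[OF y u, of "nat N"] H[of "nat N"] vge_sym vge_trans by blast
    thus ?thesis using vge_mono by fastforce
  qed
  thus ?thesis using vge_all[of "upow p y u - s"] by simp
qed

end


lemma fls_subdegree_divide:
  assumes "(a::'a::field fls) \<noteq> 0" "b \<noteq> 0" shows "fls_subdegree (a / b) = fls_subdegree a - fls_subdegree b"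
proof -
  have "a / b * b = a" using assms by simp
  moreover have "a / b \<noteq> 0" using assms by simp
  ultimately have "fls_subdegree (a / b) + fls_subdegree b = fls_subdegree a"
    using assms fls_subdegree_mult by metis
  thus ?thesis by simp
qed

lemma vge_divU: assumes "vge (x::'a::field fls) N" "vge (a - 1) 1" shows "vge (x / a) N"
proof (cases "x = 0")
  case False
  have "fls_subdegree (x / a) = fls_subdegree x" using fls_subdegree_divide[OF False Uone_subdeg(1)[OF assms(2)]] Uone_subdeg(2)[OF assms(2)] by simp
  thus ?thesis using assms(1) unfolding vge_def by auto
qed simp

lemma Zp_closed: assumes "y \<in> Zp p" "z \<in> Zp p" "p > 0"
  shows "(\<lambda>n. (y n + z n) mod int p ^ n) \<in> Zp p"
  unfolding Zp_def
proof (safe)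
  fix n
  show "0 \<le> (y n + z n) mod int p ^ n" using assms(3) by simp
  show "(y n + z n) mod int p ^ n < int p ^ n" using assms(3) by simp
  have "(y (Suc n) + z (Suc n)) mod int p ^ Suc n mod int p ^ n = (y (Suc n) + z (Suc n)) mod int p ^ n"
    by (simp add: mod_mod_cancel le_imp_power_dvd)
  also have "\<dots> = (y (Suc n) mod int p ^ n + z (Suc n) mod int p ^ n) mod int p ^ n" by (simp add: mod_add_eq)
  also have "\<dots> = (y n + z n) mod int p ^ n" using assms(1,2) unfolding Zp_def by simp
  finally show "(y (Suc n) + z (Suc n)) mod int p ^ Suc n mod int p ^ n = (y n + z n) mod int p ^ n" .
qed

context cp begin

lemma upow_Uone: assumes y: "y \<in> Zp p" and u: "vge ((u::'a fls) - 1) 1" shows "vge (upow p y u - 1) 1"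
proof -
  have a: "vge (upow p y u - u ^ nat (y 1)) 1" using upow_approx[OF y u, of 1] by simp
  show ?thesis by (rule vge_trans[OF a Uone_pow[OF u]])
qed

lemma upow_vge0: "y \<in> Zp p \<Longrightarrow> vge ((u::'a fls) - 1) 1 \<Longrightarrow> vge (upow p y u) 0"
  using upow_Uone Uone_vge0 by blast

lemma upow_mult_u:
  assumes y: "y \<in> Zp p" and u: "vge ((u::'a fls) - 1) 1" and v: "vge (v - 1) 1"
  shows "upow p y (u * v) = upow p y u * upow p y v"
proof (rule upow_eqI[OF y Uone_mult[OF u v]])
  fix M
  have "vge (upow p y u * upow p y v - u ^ nat (y M) * v ^ nat (y M)) (int M)"
    by (rule mult_approx[OF upow_approx[OF y u] upow_approx[OF y v] upow_vge0[OF y u] vge_power0[OF Uone_vge0[OF v]]])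
  thus "vge (upow p y u * upow p y v - (u * v) ^ nat (y M)) (int M)" by (simp add: power_mult_distrib)
qed

lemma upow_add_y:
  assumes y: "y \<in> Zp p" and z: "z \<in> Zp p" and u: "vge ((u::'a fls) - 1) 1"
  shows "upow p (\<lambda>n. (y n + z n) mod int p ^ n) u = upow p y u * upow p z u"
proof (rule upow_eqI[OF Zp_closed[OF y z p_pos] u])
  fix M
  define k where "k = nat ((y M + z M) mod int p ^ M)"
  define c where "c = nat ((y M + z M) div int p ^ M)"
  have "y M + z M = (y M + z M) mod int p ^ M + int p ^ M * ((y M + z M) div int p ^ M)" by simp
  moreover have "0 \<le> (y M + z M) div int p ^ M" using zp_nonneg[OF y, of M] zp_nonneg[OF z, of M] by (simp add: div_int_pos_iff)
  moreover have "0 \<le> (y M + z M) mod int p ^ M" using p_pos by simp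
  ultimately have "int (nat (y M) + nat (z M)) = int (k + p ^ M * c)"
    using zp_nonneg[OF y, of M] zp_nonneg[OF z, of M] unfolding k_def c_def by simp
  hence kc: "nat (y M) + nat (z M) = k + p ^ M * c" by (metis nat_int)
  have a: "vge (upow p y u * upow p z u - u ^ nat (y M) * u ^ nat (z M)) (int M)"
    by (rule mult_approx[OF upow_approx[OF y u] upow_approx[OF z u] upow_vge0[OF y u] vge_power0[OF Uone_vge0[OF u]]])
  have "vge (u ^ (k + p ^ M * c) - u ^ k) (int (p ^ M))" by (rule pow_period[OF u])
  moreover have "int M \<le> int (p ^ M)" using n_le_pow[of M] by linarith
  ultimately have "vge (u ^ (k + p ^ M * c) - u ^ k) (int M)" by (rule vge_mono)
  hence b: "vge (u ^ nat (y M) * u ^ nat (z M) - u ^ k) (int M)"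
    using kc by (simp add: power_add[symmetric])
  show "vge (upow p y u * upow p z u - u ^ nat ((y M + z M) mod int p ^ M)) (int M)"
    using vge_trans[OF a b] k_def by simp
qed

lemma upow_zero_y: assumes u: "vge ((u::'a fls) - 1) 1" shows "upow p (\<lambda>n. 0) u = 1"
proof -
  have "(\<lambda>n. 0::int) \<in> Zp p" unfolding Zp_def using p_pos by simp
  thus ?thesis by (rule upow_eqI[OF _ u]) simp
qed

lemma upow_cont:
  assumes y: "y \<in> Zp p" and u: "vge ((u::'a fls) - 1) 1" and v: "vge (v - 1) 1" and uv: "vge (u - v) N"
  shows "vge (upow p y u - upow p y v) N"
proof -
  define M where "M = nat N"
  have uv': "vge (u - v) (int M)"
  proof (cases "N \<ge> 0")
    case True thus ?thesis using uv M_def by simp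
  next
    case False
    have "vge (u - v) 0" using vge_diff[OF Uone_vge0[OF u] Uone_vge0[OF v]] .
    thus ?thesis using False M_def by simp
  qed
  have a: "vge (upow p y u - u ^ nat (y M)) (int M)" by (rule upow_approx[OF y u])
  have b: "vge (u ^ nat (y M) - v ^ nat (y M)) (int M)" by (rule pow_approx[OF uv' Uone_vge0[OF u] Uone_vge0[OF v]])
  have c: "vge (v ^ nat (y M) - upow p y v) (int M)" using upow_approx[OF y v] vge_sym by blast
  have "vge (upow p y u - upow p y v) (int M)" using vge_trans[OF vge_trans[OF a b] c] .
  thus ?thesis using vge_mono M_def by fastforce
qed

lemma upow_series:
  assumes y: "y \<in> Zp p" and u: "vge ((u::'a fls) - 1) 1"
  shows "series_conv (\<lambda>n. zp_binom p y n * (u - 1) ^ n) (upow p y u)"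
proof -
  define w where "w n = zp_binom p y n * (u - 1) ^ n" for n
  have W: "vge (w n) (int n)" for n unfolding w_def zp_binom_def by (rule vge_mult0[OF vge_of_nat vge_power1[OF u]])
  obtain s where s: "\<forall>N. vge (sum w {..<N} - s) (int N)" using conv_exists_trunc[OF W] by blast
  have sc: "series_conv w s" using s series_conv_iff_trunc[OF W] by blast
  hence "(THE s. series_conv w s) = s" by (rule series_conv_the)
  moreover have "upow p y u = (THE s. series_conv w s)" unfolding upow_def w_def ..
  ultimately have "upow p y u = s" by simp
  thus ?thesis using sc unfolding w_def by simp
qed

end


lemma div_cancel_aux: "(a::'b::field) \<noteq> 0 \<Longrightarrow> (a / b) * (c / a) = c / b"
  by (simp add: field_simps)

context cp begin

lemma upow_analytic:
  assumes y: "y \<in> Zp p" and a: "vge ((\<alpha>::'a fls) - 1) 1"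
  shows "analytic_on_ball (restrict (upow p y) Uone) \<alpha> fls_X"
  unfolding analytic_on_ball_def
proof (intro exI conjI ballI)
  define c where "c n = upow p y \<alpha> * zp_binom p y n * (fls_X / \<alpha>) ^ n" for n
  have an: "\<alpha> \<noteq> 0" using Uone_subdeg(1)[OF a] .
  have Xa: "vge (fls_X / \<alpha>) 1" by (rule vge_divU[OF vge_X a])
  have "vge (c n) (int n)" for n unfolding c_def zp_binom_def
    by (rule vge_mult0[OF vge_mult0[OF upow_vge0[OF y a] vge_of_nat]  vge_power1[OF Xa]])
  thus "tends0 c" by (rule tends0_trunc)
  fix u assume "u \<in> ballK \<alpha> fls_X"
  hence ua: "vge (u - \<alpha>) 1" unfolding ballK_def by simp
  have "u - 1 = (u - \<alpha>) + (\<alpha> - 1)" by simp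
  hence u: "vge (u - 1) 1" using vge_add[OF ua a] by simp
  define w where "w = u / \<alpha>"
  have w1: "w - 1 = (u - \<alpha>) / \<alpha>" using an unfolding w_def by (simp add: field_simps)
  have w: "vge (w - 1) 1" unfolding w1 by (rule vge_divU[OF ua a])
  have "series_conv (\<lambda>n. upow p y \<alpha> * (zp_binom p y n * (w - 1) ^ n)) (upow p y \<alpha> * upow p y w)"
    by (rule series_conv_scale[OF upow_series[OF y w]])
  moreover have "upow p y \<alpha> * upow p y w = upow p y u"
    using upow_mult_u[OF y a w] an unfolding w_def by simp
  moreover have "upow p y \<alpha> * (zp_binom p y n * (w - 1) ^ n) = c n * ((u - \<alpha>) / fls_X) ^ n" for n
  proof -
    have "(fls_X / \<alpha>) ^ n * ((u - \<alpha>) / fls_X) ^ n = ((fls_X / \<alpha>) * ((u - \<alpha>) / fls_X)) ^ n"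
      by (simp only: power_mult_distrib[symmetric])
    also have "(fls_X / \<alpha>) * ((u - \<alpha>) / fls_X) = w - 1" unfolding w1 by (rule div_cancel_aux) simp
    finally show ?thesis unfolding c_def by (simp add: mult.assoc)
  qed
  moreover have "restrict (upow p y) Uone u = upow p y u" using u by (simp add: Uone_iff)
  ultimately show "series_conv (\<lambda>n. c n * ((u - \<alpha>) / fls_X) ^ n) (restrict (upow p y) Uone u)"
    by simp
qed

lemma upow_in_Lambda:
  assumes y: "y \<in> Zp p" shows "restrict (upow p y) Uone \<in> (Lambda_set :: ('a fls \<Rightarrow> 'a fls) set)"
  unfolding Lambda_set_def
proof (intro CollectI conjI)
  show "restrict (upow p y) (Uone :: 'a fls set) \<in> extensional Uone" by simp
  show "restrict (upow p y) (Uone :: 'a fls set) \<in> Uone \<rightarrow> Uone"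
  proof
    fix u :: "'a fls" assume "u \<in> Uone"
    thus "upow p y u \<in> Uone" using upow_Uone[OF y, of u] by (simp add: Uone_iff)
  qed
  show "\<forall>u\<in>(Uone :: 'a fls set). \<forall>v\<in>Uone. restrict (upow p y) Uone (u * v) = restrict (upow p y) Uone u * restrict (upow p y) Uone v"
  proof (intro ballI)
    fix u v :: "'a fls" assume uv: "u \<in> Uone" "v \<in> Uone"
    hence "u * v \<in> Uone" using Uone_mult[of u v] by (simp add: Uone_iff)
    thus "restrict (upow p y) Uone (u * v) = restrict (upow p y) Uone u * restrict (upow p y) Uone v"
      using uv upow_mult_u[OF y, of u v] by (simp add: Uone_iff)
  qed
  show "locally_analytic_U (restrict (upow p y) (Uone :: 'a fls set))"
    unfolding locally_analytic_U_def
  proof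
    show "cont_on_K Uone (restrict (upow p y) (Uone :: 'a fls set))"
      unfolding cont_on_K_def
    proof (intro ballI allI)
      fix x :: "'a fls" and N assume x: "x \<in> Uone"
      show "\<exists>M. \<forall>z\<in>Uone. vge (z - x) M \<longrightarrow> vge (restrict (upow p y) Uone z - restrict (upow p y) Uone x) N"
      proof (intro exI[of _ N] ballI impI)
        fix z :: "'a fls" assume z: "z \<in> Uone" "vge (z - x) N"
        thus "vge (restrict (upow p y) Uone z - restrict (upow p y) Uone x) N"
          using x upow_cont[OF y, of z x N] by (simp add: Uone_iff)
      qed
    qed
    show "\<forall>\<alpha>\<in>(Uone :: 'a fls set). \<exists>\<rho>. \<rho> \<in> RK \<and> \<rho> \<noteq> 0 \<and> ballK \<alpha> \<rho> \<subseteq> Uone \<and> analytic_on_ball (restrict (upow p y) Uone) \<alpha> \<rho>"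
    proof
      fix \<alpha> :: "'a fls" assume "\<alpha> \<in> Uone"
      hence a: "vge (\<alpha> - 1) 1" by (simp add: Uone_iff)
      have "ballK \<alpha> fls_X \<subseteq> Uone"
      proof
        fix u assume "u \<in> ballK \<alpha> fls_X"
        hence ua: "vge (u - \<alpha>) 1" unfolding ballK_def by simp
        have "u - 1 = (u - \<alpha>) + (\<alpha> - 1)" by simp
        thus "u \<in> Uone" using vge_add[OF ua a] by (simp add: Uone_iff)
      qed
      moreover have "fls_X \<in> RK" by (simp add: RK_iff vge_mono[OF vge_X])
      ultimately show "\<exists>\<rho>. \<rho> \<in> RK \<and> \<rho> \<noteq> 0 \<and> ballK \<alpha> \<rho> \<subseteq> Uone \<and> analytic_on_ball (restrict (upow p y) Uone) \<alpha> \<rho>"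
        using upow_analytic[OF y a] by (intro exI[of _ fls_X]) simp
    qed
  qed
qed

lemma pow_not_one:
  assumes "0 < D" "D < p ^ M"
  shows "\<not> vge ((1 + fls_X :: 'a fls) ^ D - 1) (int (p ^ M))"
  using assms
proof (induction D arbitrary: M rule: less_induct)
  case (less D)
  show ?case
  proof (cases "p dvd D")
    case False
    have "fls_nth ((1 + fls_X :: 'a fls) ^ D) 1 = of_nat D" using fls_nth_one_plus_X_pow[of D 1] by simp
    hence "fls_nth ((1 + fls_X :: 'a fls) ^ D - 1) 1 \<noteq> 0"
      using of_nat_nz[OF False] by (simp add: fls_of_nat)
    moreover have "1 < int (p ^ M)" using less.prems by linarith
    ultimately show ?thesis unfolding vge_iff by blast
  next
    case True
    then obtain D2 where D2: "D = p * D2" by blast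
    have M: "M \<ge> 1" using less.prems by (cases M) auto
    have D2p: "0 < D2" "D2 < D" using less.prems D2 p_ge2 by auto
    have "p * D2 < p * p ^ (M - 1)" using less.prems D2 M by (cases M) auto
    hence "D2 < p ^ (M - 1)" by simp
    hence nz: "\<not> vge ((1 + fls_X :: 'a fls) ^ D2 - 1) (int (p ^ (M - 1)))" using less.IH[OF D2p(2) D2p(1)] by blast
    define z where "z = (1 + fls_X :: 'a fls) ^ D2 - 1"
    have zn: "z \<noteq> 0" using nz z_def by auto
    have zs: "fls_subdegree z < int (p ^ (M - 1))" using nz zn unfolding z_def vge_def by auto
    have "(1 + fls_X :: 'a fls) ^ D - 1 = z ^ p"
      unfolding z_def D2 using frob1_diff[of "(1 + fls_X) ^ D2" 1] by (simp add: power_mult mult.commute)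
    moreover have "fls_subdegree (z ^ p) = int p * fls_subdegree z" by (simp add: fls_subdegree_pow)
    moreover have "int p * fls_subdegree z < int p * int (p ^ (M - 1))" using zs p_pos by simp
    moreover have "int p * int (p ^ (M - 1)) = int (p ^ M)" using M by (cases M) auto
    moreover have "z ^ p \<noteq> 0" using zn by simp
    ultimately show ?thesis unfolding vge_def by auto
  qed
qed

lemma upow_inj:
  assumes y: "y \<in> Zp p" and z: "z \<in> Zp p" and E: "\<And>u. vge ((u::'a fls) - 1) 1 \<Longrightarrow> upow p y u = upow p z u"
  shows "y = z"
proof (rule ccontr)
  assume "y \<noteq> z"
  then obtain M where "y M \<noteq> z M" by blast
  hence ne: "nat (y M) \<noteq> nat (z M)" using zp_nonneg[OF y, of M] zp_nonneg[OF z, of M] by simp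
  define u where "u = (1 + fls_X :: 'a fls)"
  have u: "vge (u - 1) 1" unfolding u_def by simp
  have approx: "vge (upow p w u - u ^ nat (w M)) (int (p ^ M))" if w: "w \<in> Zp p" for w
  proof -
    have "M \<le> p ^ M" using n_le_pow[of M] by simp
    then obtain c where c: "nat (w (p ^ M)) = nat (w M) + p ^ M * c" using zp_decomp[OF w] by blast
    have a: "vge (upow p w u - u ^ nat (w (p ^ M))) (int (p ^ M))" by (rule upow_approx[OF w u])
    have b: "vge (u ^ (nat (w M) + p ^ M * c) - u ^ nat (w M)) (int (p ^ M))" by (rule pow_period[OF u])
    show ?thesis using vge_trans[OF a b[folded c]] .
  qed
  have "vge (u ^ nat (y M) - u ^ nat (z M)) (int (p ^ M))"
  proof -
    have "vge (u ^ nat (y M) - upow p y u) (int (p ^ M))" using approx[OF y] vge_sym by blast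
    moreover have "upow p y u = upow p z u" using E[OF u] .
    ultimately show ?thesis using vge_trans approx[OF z] by metis
  qed
  moreover have lt: "nat (y M) < p ^ M" "nat (z M) < p ^ M" using zp_less[OF y, of M] zp_less[OF z, of M] zp_nonneg[OF y, of M] zp_nonneg[OF z, of M]
    by (simp_all add: nat_less_iff)
  ultimately have G: "vge (u ^ A - u ^ B) (int (p ^ M))" "A < B" "B < p ^ M"
    if "A = min (nat (y M)) (nat (z M))" "B = max (nat (y M)) (nat (z M))" for A B
    using ne that vge_sym by (auto simp: min_def max_def split: if_splits)
  define A where "A = min (nat (y M)) (nat (z M))"
  define B where "B = max (nat (y M)) (nat (z M))"
  note G = G[OF A_def B_def]
  have "u ^ B - u ^ A = u ^ A * (u ^ (B - A) - 1)"
    using G(2) by (simp add: right_diff_distrib power_add[symmetric])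
  hence "vge (u ^ A * (u ^ (B - A) - 1)) (int (p ^ M))" using G(1) vge_sym by metis
  hence "vge (u ^ (B - A) - 1) (int (p ^ M))" by (rule vge_cancelU[OF Uone_pow[OF u]])
  moreover have "0 < B - A" "B - A < p ^ M" using G by auto
  ultimately show False using pow_not_one unfolding u_def by blast
qed

end


definition evs :: "(nat \<Rightarrow> 'a::field fls) \<Rightarrow> 'a fls \<Rightarrow> 'a fls" where
  "evs b x = (THE s. \<forall>N. vge (sum (\<lambda>n. b n * x ^ n) {..<N} - s) (int N))"

definition intg :: "(nat \<Rightarrow> 'a::field fls) \<Rightarrow> bool" where
  "intg b \<longleftrightarrow> (\<forall>n. vge (b n) 0)"

lemma evs_trunc:
  assumes b: "intg b" and x: "vge x 1"
  shows "vge (sum (\<lambda>n. b n * x ^ n) {..<N} - evs b x) (int N)"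
proof -
  have W: "vge (b n * x ^ n) (int n)" for n using b x unfolding intg_def by (intro vge_mult0 vge_power1) auto
  obtain s where s: "\<forall>N. vge (sum (\<lambda>n. b n * x ^ n) {..<N} - s) (int N)" using conv_exists_trunc[OF W] by blast
  have "evs b x = s" unfolding evs_def
  proof (rule the_equality)
    show "\<forall>N. vge (sum (\<lambda>n. b n * x ^ n) {..<N} - s) (int N)" by (rule s)
    fix t assume "\<forall>N. vge (sum (\<lambda>n. b n * x ^ n) {..<N} - t) (int N)"
    thus "t = s" using trunc_unique s by blast
  qed
  thus ?thesis using s by simp
qed

lemma evs_eqI:
  assumes b: "intg b" and x: "vge x 1" and H: "\<And>N. vge (sum (\<lambda>n. b n * x ^ n) {..<N} - s) (int N)"
  shows "evs b x = s"
  using trunc_unique[of "\<lambda>n. b n * x ^ n" "evs b x" s] evs_trunc[OF b x] H by blast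

lemma evs_vge0: assumes b: "intg b" and x: "vge x 1" shows "vge (evs b x) 0"
proof -
  have "vge (sum (\<lambda>n. b n * x ^ n) {..<0} - evs b x) 0" using evs_trunc[OF b x, of 0] by simp
  thus ?thesis by simp
qed

lemma split_sum_vge:
  fixes n0 :: nat and A :: "nat set"
  assumes "finite A" "n0 \<in> A" "\<And>n. n \<in> A \<Longrightarrow> n < n0 \<Longrightarrow> g n = 0"
    "\<And>n. n \<in> A \<Longrightarrow> n > n0 \<Longrightarrow> vge (g n :: 'a::field fls) N" "vge (sum g A) N"
  shows "vge (g n0) N"
proof -
  have "sum g A = g n0 + sum g (A - {n0})" using assms(1,2) by (simp add: sum.remove)
  moreover have "vge (sum g (A - {n0})) N"
  proof (rule vge_sum)
    fix n assume n: "n \<in> A - {n0}"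
    show "vge (g n) N"
    proof (cases "n < n0")
      case True thus ?thesis using assms(3) n by simp
    next
      case False
      have "n \<noteq> n0" using n by blast
      hence "n > n0" using False by linarith
      thus ?thesis using assms(4) n by blast
    qed
  qed
  ultimately have "g n0 = sum g A - sum g (A - {n0})" by simp
  thus ?thesis using vge_diff assms(5) \<open>vge (sum g (A - {n0})) N\<close> by metis
qed

lemma identity_general:
  assumes T: "tends0 (e :: nat \<Rightarrow> 'a::field fls)"
    and H: "\<And>K. \<exists>D\<ge>K. series_conv (\<lambda>n. e n * (fls_X ^ D) ^ n) 0"
  shows "e n = 0"
proof (rule ccontr)
  assume "e n \<noteq> 0"
  define n0 where "n0 = (LEAST n. e n \<noteq> 0)"
  have e0: "e n0 \<noteq> 0" using \<open>e n \<noteq> 0\<close> unfolding n0_def by (rule LeastI)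
  have below: "e n = 0" if "n < n0" for n using not_less_Least[OF that[unfolded n0_def]] by blast
  obtain L where L: "L \<le> 0" "\<And>n. vge (e n) L" using tends0_lower_bound[OF T] by blast
  define V where "V = fls_subdegree (e n0)"
  obtain D where D: "D \<ge> nat (V - L + 1)" "series_conv (\<lambda>n. e n * (fls_X ^ D) ^ n) 0" using H by blast
  define N where "N = V + int D * int n0 + 1"
  obtain M where M: "\<forall>m\<ge>M. vge (sum (\<lambda>n. e n * (fls_X ^ D) ^ n) {..<m} - 0) N"
    using D(2) unfolding series_conv_def by blast
  define m where "m = max M (Suc n0)"
  have S: "vge (sum (\<lambda>n. e n * (fls_X ^ D) ^ n) {..<m}) N" using M m_def by auto
  have "vge (e n0 * (fls_X ^ D) ^ n0) N"
  proof (rule split_sum_vge[OF _ _ _ _ S])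
    show "finite {..<m}" by simp
    show "n0 \<in> {..<m}" by (simp add: m_def)
    show "e n * (fls_X ^ D) ^ n = 0" if "n < n0" for n using below[OF that] by simp
    show "vge (e n * (fls_X ^ D) ^ n) N" if "n > n0" for n
    proof -
      have "vge (e n * (fls_X ^ D) ^ n) (L + int (D * n))"
        by (rule vge_mult[OF L(2)]) (simp only: power_mult[symmetric] vge_X_power)
      moreover have "N \<le> L + int (D * n)"
      proof -
        have "int D \<ge> V - L + 1" using D(1) by linarith
        moreover have "int (D * n) \<ge> int D * int n0 + int D"
        proof -
          have "D * Suc n0 \<le> D * n" using that by (intro mult_le_mono2) simp
          thus ?thesis by (simp add: algebra_simps) (metis of_nat_add of_nat_le_iff of_nat_mult)
        qed
        ultimately show ?thesis unfolding N_def by linarith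
      qed
      ultimately show ?thesis by (rule vge_mono)
    qed
  qed
  moreover have "fls_subdegree (e n0 * (fls_X ^ D) ^ n0) = V + int D * int n0"
    using e0 by (simp add: V_def fls_subdegree_pow power_mult[symmetric])
  moreover have "e n0 * (fls_X ^ D) ^ n0 \<noteq> 0" using e0 by simp
  ultimately show False unfolding N_def vge_def by auto
qed

lemma taylor1:
  assumes x: "vge (x::'a::field fls) 0" and h: "vge h v" and v: "v \<ge> 0"
  shows "vge ((x + h) ^ n - x ^ n - of_nat n * x ^ (n - 1) * h) (2 * v)"
proof (induction n)
  case 0 thus ?case by simp
next
  case (Suc n)
  define D where "D = of_nat n * x ^ (n - 1)"
  have xD: "x * D + x ^ n = of_nat (Suc n) * x ^ n"
    by (cases n) (simp_all add: D_def algebra_simps)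
  have "(x + h) ^ Suc n - x ^ Suc n - of_nat (Suc n) * x ^ (Suc n - 1) * h
        = (x + h) * ((x + h) ^ n - x ^ n - D * h) + D * h * h"
    using xD by (simp add: algebra_simps)
  moreover have "vge ((x + h) * ((x + h) ^ n - x ^ n - D * h)) (2 * v)"
    by (rule vge_mult0[OF vge_add[OF x vge_mono[OF h v]]]) (use Suc.IH D_def in simp)
  moreover have "vge (D * h * h) (2 * v)"
  proof -
    have "vge (D * (h * h)) (0 + (v + v))" unfolding D_def
      by (rule vge_mult[OF vge_mult0[OF vge_of_nat vge_power0[OF x]] vge_mult[OF h h]])
    thus ?thesis by (simp add: mult.assoc)
  qed
  ultimately show ?case using vge_add by metis
qed

context cp begin

definition Fp :: "'a fls \<Rightarrow> bool" where "Fp z \<longleftrightarrow> (\<exists>k<p. z = of_nat k)"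

lemma Fp_of_nat: "Fp (of_nat k)"
  unfolding Fp_def using of_nat_mod_p[of k] p_pos by (intro exI[of _ "k mod p"]) simp

lemma Fp_add: assumes "Fp a" "Fp b" shows "Fp (a + b)"
proof -
  obtain i j where "a = of_nat i" "b = of_nat j" using assms unfolding Fp_def by blast
  hence "a + b = of_nat (i + j)" by simp
  thus ?thesis using Fp_of_nat[of "i + j"] by (simp only:)
qed
lemma Fp_mult: assumes "Fp a" "Fp b" shows "Fp (a * b)"
proof -
  obtain i j where "a = of_nat i" "b = of_nat j" using assms unfolding Fp_def by blast
  hence "a * b = of_nat (i * j)" by simp
  thus ?thesis using Fp_of_nat[of "i * j"] by (simp only:)
qed
lemma Fp_uminus: assumes "Fp a" shows "Fp (- a)"
proof -
  obtain k where k: "a = of_nat k" using assms Fp_def by blast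
  have "(p - 1) * k + k = p * k" using p_pos by (cases p) auto
  hence "(of_nat ((p - 1) * k) :: 'a fls) + of_nat k = of_nat (p * k)" by (metis of_nat_add)
  also have "\<dots> = 0" using of_nat_fls_0_iff by simp
  finally have "- a = of_nat ((p - 1) * k)" using k by (simp add: neg_eq_iff_add_eq_0 add.commute)
  thus ?thesis using Fp_of_nat[of "(p - 1) * k"] by (simp only:)
qed
lemma Fp_diff: "Fp a \<Longrightarrow> Fp b \<Longrightarrow> Fp (a - b)"
  using Fp_add Fp_uminus by (metis diff_conv_add_uminus)
lemma Fp_vge0: "Fp a \<Longrightarrow> vge a 0"
  unfolding Fp_def by auto
lemma Fp_subdeg: "Fp a \<Longrightarrow> a \<noteq> 0 \<Longrightarrow> fls_subdegree a = 0"
  unfolding Fp_def by auto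

lemma Fp_intg: "(\<And>n. Fp (b n)) \<Longrightarrow> intg b"
  unfolding intg_def using Fp_vge0 by blast

lemma identity_Fp:
  assumes F: "\<And>n. Fp (h n)" and e: "e \<ge> 1"
    and H: "\<And>N. vge (sum (\<lambda>i. h i * (fls_X ^ e) ^ i) {..<N}) (int N)"
  shows "h n = 0"
proof (rule ccontr)
  assume "h n \<noteq> 0"
  define n0 where "n0 = (LEAST n. h n \<noteq> 0)"
  have e0: "h n0 \<noteq> 0" using \<open>h n \<noteq> 0\<close> unfolding n0_def by (rule LeastI)
  have below: "h n = 0" if "n < n0" for n using not_less_Least[OF that[unfolded n0_def]] by blast
  define N where "N = e * n0 + 1"
  have S: "vge (sum (\<lambda>i. h i * (fls_X ^ e) ^ i) {..<N}) (int N)" by (rule H)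
  have "vge (h n0 * (fls_X ^ e) ^ n0) (int N)"
  proof (rule split_sum_vge[OF _ _ _ _ S])
    show "finite {..<N}" by simp
    have "n0 \<le> e * n0" using e by simp
    hence "n0 < N" unfolding N_def by linarith
    thus "n0 \<in> {..<N}" by simp
    show "h n * (fls_X ^ e) ^ n = 0" if "n < n0" for n using below[OF that] by simp
    show "vge (h n * (fls_X ^ e) ^ n) (int N)" if "n > n0" for n
    proof -
      have "vge (h n * (fls_X ^ e) ^ n) (0 + int (e * n))"
        by (rule vge_mult[OF Fp_vge0[OF F]]) (simp only: power_mult[symmetric] vge_X_power)
      moreover have "e * n0 + 1 \<le> e * n"
      proof -
        have "e * Suc n0 \<le> e * n" using that by (intro mult_le_mono2) simp
        thus ?thesis using e by simp
      qed
      hence "int N \<le> 0 + int (e * n)" unfolding N_def by linarith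
      ultimately show ?thesis by (rule vge_mono)
    qed
  qed
  moreover have "fls_subdegree (h n0 * (fls_X ^ e) ^ n0) = int (e * n0)"
    using e0 Fp_subdeg[OF F e0] by (simp add: fls_subdegree_pow power_mult[symmetric])
  moreover have "h n0 * (fls_X ^ e) ^ n0 \<noteq> 0" using e0 by simp
  ultimately show False unfolding N_def vge_def by auto
qed

lemma roots_Fp: assumes "(z::'a fls) ^ p = z" shows "Fp z"
proof (rule ccontr)
  assume nz: "\<not> Fp z"
  define P where "P = monom (1::'a fls) p + [:0, -1:]"
  have degP: "degree P = p" using p_ge2 unfolding P_def by (subst degree_add_eq_left) (simp_all add: degree_monom_eq)
  hence P0: "P \<noteq> 0" using p_ge2 by auto
  have ev: "poly P w = w ^ p - w" for w unfolding P_def by (simp add: poly_monom)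
  have "insert z ((\<lambda>k. of_nat k) ` {..<p}) \<subseteq> {w. poly P w = 0}"
    using assms of_nat_pow_p by (auto simp: ev)
  hence "card (insert z ((\<lambda>k. of_nat k :: 'a fls) ` {..<p})) \<le> card {w. poly P w = 0}"
    by (intro card_mono) (auto intro: poly_roots_finite[OF P0])
  also have "\<dots> \<le> p" using card_poly_roots_bound[OF P0] degP by simp
  finally have c: "card (insert z ((\<lambda>k. of_nat k :: 'a fls) ` {..<p})) \<le> p" .
  have "inj_on (\<lambda>k. of_nat k :: 'a fls) {..<p}" using of_nat_inj by (auto simp: inj_on_def)
  hence "card ((\<lambda>k. of_nat k :: 'a fls) ` {..<p}) = p" by (simp add: card_image)
  moreover have "z \<notin> (\<lambda>k. of_nat k :: 'a fls) ` {..<p}" using nz unfolding Fp_def by auto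
  ultimately show False using c by simp
qed

end


definition FE :: "(nat \<Rightarrow> 'a::field fls) \<Rightarrow> nat \<Rightarrow> nat \<Rightarrow> bool" where
  "FE b d m \<longleftrightarrow> (\<forall>a\<ge>m. \<forall>c\<ge>m. evs b ((1 + fls_X ^ (d * a)) * (1 + fls_X ^ (d * c)) - 1)
                      = evs b (fls_X ^ (d * a)) * evs b (fls_X ^ (d * c)))"

lemma tail_poly:
  assumes a: "\<And>i. vge (a i :: 'a::field fls) 0" and x: "vge x 1" and NK: "N \<le> K"
  shows "vge (sum (\<lambda>i. a i * x ^ i) {..<K} - sum (\<lambda>i. a i * x ^ i) {..<N}) (int N)"
proof (rule sum_tail_vge[OF _ NK])
  fix n assume "N \<le> n"
  hence "vge (a n * x ^ n) (int n)" using vge_mult0[OF a vge_power1[OF x]] by blast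
  thus "vge (a n * x ^ n) (int N)" using \<open>N \<le> n\<close> vge_mono by fastforce
qed

context cp begin

lemma recursion:
  assumes F: "\<And>n. Fp (b n)" and b0: "b 0 = 1" and FE: "FE b d m" and d: "d \<ge> 1" and m: "m \<ge> 1"
  shows "of_nat (Suc i) * b (Suc i) = (b 1 - of_nat i) * b i"
proof -
  have I: "intg b" by (rule Fp_intg[OF F])
  have bv: "vge (b n) 0" for n using Fp_vge0[OF F] .
  define h where "h i = of_nat (Suc i) * b (Suc i) + (of_nat i * b i - b 1 * b i)" for i
  have Fh: "Fp (h i)" for i unfolding h_def
    by (intro Fp_add Fp_diff Fp_mult F Fp_of_nat)
  define e where "e = d * m"
  have e: "e \<ge> 1" using d m by (simp add: e_def)
  define x where "x = (fls_X :: 'a fls) ^ e"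
  have vx: "vge x 1" unfolding x_def using vge_mono[OF vge_X_power[of e], of 1] e by simp
  have vx0: "vge x 0" using vge_mono[OF vx] by simp
  have key: "vge (sum (\<lambda>i. h i * x ^ i) {..<N}) (int N)" for N
  proof -
    define c where "c = m + N + 1"
    define C where "C = d * c"
    have "m + N + 1 \<le> d * (m + N + 1)" using mult_le_mono1[OF d, of "m + N + 1"] by (simp only: mult_1)
    hence C: "C \<ge> N + 1" unfolding C_def c_def by linarith
    define z where "z = (fls_X :: 'a fls) ^ C"
    have vz: "vge z (int C)" unfolding z_def by simp
    have vz1: "vge z 1" using vge_mono[OF vz, of 1] C by simp
    define g where "g = 1 + x"
    have vg: "vge g 0" unfolding g_def by (rule vge_add[OF vge_one vx0])
    define w where "w = (1 + x) * (1 + z) - 1"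
    have w_eq: "w = x + z * g" unfolding w_def g_def by (simp add: algebra_simps)
    have vzg: "vge (z * g) (int C)" using vge_mult0'[OF vz vg] .
    have vw: "vge w 1" unfolding w_eq by (rule vge_add[OF vx vge_mono[OF vzg]]) (use C in simp)
    define M where "M = C + N"
    have M2C: "int M \<le> 2 * int C" using C unfolding M_def by simp
    have cm: "c \<ge> m" by (simp add: c_def)
    have FEw: "evs b w = evs b x * evs b z"
      using FE[unfolded FE_def, rule_format, OF le_refl cm] unfolding w_def x_def z_def e_def C_def .
    define S where "S y = sum (\<lambda>n. b n * y ^ n) {..<M}" for y
    define D where "D = sum (\<lambda>n. b n * (of_nat n * x ^ (n - 1))) {..<M}"
    have i1: "vge (S w - evs b w) (int M)" unfolding S_def by (rule evs_trunc[OF I vw])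
    have R1: "vge (S w - S x - z * g * D) (int M)"
    proof -
      have "S w - S x - z * g * D = sum (\<lambda>n. b n * ((x + z * g) ^ n - x ^ n - of_nat n * x ^ (n - 1) * (z * g))) {..<M}"
        unfolding S_def D_def w_eq by (simp add: sum_subtractf[symmetric] sum_distrib_left algebra_simps)
      moreover have "vge (sum (\<lambda>n. b n * ((x + z * g) ^ n - x ^ n - of_nat n * x ^ (n - 1) * (z * g))) {..<M}) (2 * int C)"
        by (intro vge_sum vge_mult0[OF bv] taylor1[OF vx0 vzg]) simp
      ultimately show ?thesis using vge_mono[OF _ M2C] by simp
    qed
    have i3: "vge (evs b x - S x) (int M)" unfolding S_def using evs_trunc[OF I vx] vge_sym by blast
    have i4: "vge (evs b z - (1 + b 1 * z)) (int M)"
    proof -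
      have t1: "vge (sum (\<lambda>n. b n * z ^ n) {..<2 * C} - evs b z) (int (2 * C))" by (rule evs_trunc[OF I vz1])
      have t2: "vge (sum (\<lambda>n. b n * z ^ n) {..<2 * C} - sum (\<lambda>n. b n * z ^ n) {..<2}) (int (2 * C))"
      proof (rule sum_tail_vge)
        fix n :: nat assume "2 \<le> n"
        have "vge (b n * z ^ n) (0 + int n * int C)" by (rule vge_mult[OF bv vge_power[OF vz]])
        moreover have "int (2 * C) \<le> 0 + int n * int C" using \<open>2 \<le> n\<close> by (simp add: mult_right_mono)
        ultimately show "vge (b n * z ^ n) (int (2 * C))" by (rule vge_mono)
      next
        show "2 \<le> 2 * C" using C by simp
      qed
      have "sum (\<lambda>n. b n * z ^ n) {..<2} = 1 + b 1 * z" by (simp add: numeral_2_eq_2 b0)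
      moreover have "vge (sum (\<lambda>n. b n * z ^ n) {..<2} - evs b z) (int (2 * C))"
        using vge_trans[OF iffD1[OF vge_sym t2] t1] .
      ultimately have "vge (1 + b 1 * z - evs b z) (int (2 * C))" by simp
      hence "vge (evs b z - (1 + b 1 * z)) (int (2 * C))" by (subst vge_sym)
      thus ?thesis using vge_mono[OF _ M2C] by simp
    qed
    have i34: "vge (evs b x * evs b z - S x * (1 + b 1 * z)) (int M)"
      by (rule mult_approx[OF i3 i4 evs_vge0[OF I vx]]) (intro vge_add vge_one vge_mult0[OF bv] vge_mono[OF vz], simp)
    have "z * (g * D - b 1 * S x) = (S w - evs b w) + (evs b x * evs b z - S x * (1 + b 1 * z)) - (S w - S x - z * g * D)"
      using FEw by (simp add: algebra_simps)
    moreover have "vge ((S w - evs b w) + (evs b x * evs b z - S x * (1 + b 1 * z)) - (S w - S x - z * g * D)) (int M)"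
      by (rule vge_diff[OF vge_add[OF i1 i34] R1])
    ultimately have "vge (fls_X ^ C * (g * D - b 1 * S x)) (int M)" unfolding z_def by simp
    hence "vge (g * D - b 1 * S x) (int M - int C)" by (rule vge_cancel_X)
    hence A: "vge (g * D - b 1 * S x) (int N)" by (simp add: M_def)
    obtain M' where M': "M = Suc M'" using C unfolding M_def by (cases "C + N") auto
    have NM': "N \<le> M'" using C M' unfolding M_def by simp
    define a1 where "a1 i = of_nat (Suc i) * b (Suc i)" for i
    define a2 where "a2 i = of_nat i * b i - b 1 * b i" for i
    have va1: "vge (a1 i) 0" for i unfolding a1_def by (rule vge_mult0[OF vge_of_nat bv])
    have va2: "vge (a2 i) 0" for i unfolding a2_def by (rule vge_diff[OF vge_mult0[OF vge_of_nat bv] vge_mult0[OF bv bv]])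
    have D_eq: "D = sum (\<lambda>i. a1 i * x ^ i) {..<M'}"
      unfolding D_def M' a1_def by (subst sum.lessThan_Suc_shift) (simp add: algebra_simps)
    have xD_eq: "x * D = sum (\<lambda>i. (of_nat i * b i) * x ^ i) {..<M}"
      unfolding D_def sum_distrib_left
    proof (intro sum.cong refl)
      fix n show "x * (b n * (of_nat n * x ^ (n - 1))) = of_nat n * b n * x ^ n"
        by (cases n) (simp_all add: algebra_simps)
    qed
    have gD: "g * D - b 1 * S x = sum (\<lambda>i. a1 i * x ^ i) {..<M'} + sum (\<lambda>i. a2 i * x ^ i) {..<M}"
    proof -
      have "g * D - b 1 * S x = D + (x * D - b 1 * S x)" unfolding g_def by (simp add: algebra_simps)
      also have "x * D - b 1 * S x = sum (\<lambda>i. a2 i * x ^ i) {..<M}"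
        unfolding xD_eq S_def a2_def by (simp add: sum_subtractf[symmetric] sum_distrib_left algebra_simps)
      finally show ?thesis using D_eq by simp
    qed
    have hsum: "sum (\<lambda>i. h i * x ^ i) {..<N} = sum (\<lambda>i. a1 i * x ^ i) {..<N} + sum (\<lambda>i. a2 i * x ^ i) {..<N}"
      unfolding h_def a1_def a2_def by (simp add: sum.distrib[symmetric] algebra_simps)
    have T1: "vge (sum (\<lambda>i. a1 i * x ^ i) {..<M'} - sum (\<lambda>i. a1 i * x ^ i) {..<N}) (int N)"
      by (rule tail_poly[OF va1 vx NM'])
    have T2: "vge (sum (\<lambda>i. a2 i * x ^ i) {..<M} - sum (\<lambda>i. a2 i * x ^ i) {..<N}) (int N)"
      by (rule tail_poly[OF va2 vx]) (use NM' M' in simp)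
    have "sum (\<lambda>i. h i * x ^ i) {..<N} = (g * D - b 1 * S x)
          - (sum (\<lambda>i. a1 i * x ^ i) {..<M'} - sum (\<lambda>i. a1 i * x ^ i) {..<N})
          - (sum (\<lambda>i. a2 i * x ^ i) {..<M} - sum (\<lambda>i. a2 i * x ^ i) {..<N})"
      using gD hsum by simp
    thus ?thesis using vge_diff[OF vge_diff[OF A T1] T2] by simp
  qed
  have "h i = 0" by (rule identity_Fp[OF Fh e]) (use key x_def in simp)
  thus ?thesis unfolding h_def by (simp add: algebra_simps)
qed

end


lemma sum_regroup: "sum (f :: nat \<Rightarrow> 'b::comm_monoid_add) {..<N * p} = (\<Sum>q<N. \<Sum>r<p. f (q * p + r))"
proof (induction N)
  case 0 thus ?case by simp
next
  case (Suc N)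
  have "sum f {..<Suc N * p} = sum f {..<N * p} + sum f {N * p..<N * p + p}"
    using sum.atLeastLessThan_concat[of 0 "N * p" "N * p + p" f] by (simp add: atLeast0LessThan add.commute)
  moreover have "sum f {N * p..<N * p + p} = (\<Sum>r<p. f (N * p + r))"
    using sum.shift_bounds_nat_ivl[of f 0 "N * p" p] by (simp add: atLeast0LessThan add.commute)
  ultimately show ?case using Suc.IH by simp
qed

lemma choose_rec_nat: "Suc r * (y0 choose Suc r) = (y0 - r) * (y0 choose r)"
  using binomial_absorption[of r y0] binomial_absorb_comp[of y0 r] by simp

context cp begin

definition dig :: "'a fls \<Rightarrow> nat" where "dig z = (SOME j. j < p \<and> z = of_nat j)"

lemma dig: assumes "Fp z" shows "dig z < p" "z = of_nat (dig z)"
proof -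
  have "\<exists>j. j < p \<and> z = of_nat j" using assms unfolding Fp_def by blast
  hence "dig z < p \<and> z = of_nat (dig z)" unfolding dig_def by (rule someI_ex)
  thus "dig z < p" "z = of_nat (dig z)" by auto
qed

lemma dig_of_nat: assumes "j < p" shows "dig (of_nat j) = j"
proof -
  have "dig (of_nat j :: 'a fls) < p" "(of_nat j :: 'a fls) = of_nat (dig (of_nat j :: 'a fls))"
    using dig[OF Fp_of_nat[of j]] by auto
  thus ?thesis using of_nat_inj[OF _ assms] by auto
qed

definition Yk :: "(nat \<Rightarrow> 'a fls) \<Rightarrow> nat \<Rightarrow> nat" where
  "Yk b k = (\<Sum>e<k. dig (b (p ^ e)) * p ^ e)"

lemma dig_structure:
  assumes rec: "\<And>i. of_nat (Suc i) * b (Suc i) = (b 1 - of_nat i) * (b i :: 'a fls)"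
    and y0: "b 1 = of_nat y0" "y0 < p" and r: "r < p"
  shows "b (q * p + r) = b (q * p) * of_nat (y0 choose r)"
  using r
proof (induction r)
  case 0 thus ?case by simp
next
  case (Suc r)
  have qp: "(of_nat (q * p) :: 'a fls) = 0" using of_nat_fls_0_iff by simp
  have e1: "(of_nat (Suc (q * p + r)) :: 'a fls) = of_nat (Suc r)" using qp by simp
  have e2: "(of_nat (q * p + r) :: 'a fls) = of_nat r" using qp by simp
  have A: "of_nat (Suc r) * b (q * p + Suc r) = (of_nat y0 - of_nat r) * (b (q * p) * of_nat (y0 choose r))"
  proof -
    have pz: "(of_nat p :: 'a fls) = 0" using of_nat_fls_0_iff by simp
    have "of_nat (Suc (q * p + r)) * b (Suc (q * p + r)) = (b 1 - of_nat (q * p + r)) * b (q * p + r)" by (rule rec)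
    thus ?thesis using y0(1) Suc.IH Suc.prems pz by (simp add: add.commute)
  qed
  have B: "(of_nat y0 - of_nat r) * (of_nat (y0 choose r) :: 'a fls) = of_nat (Suc r) * of_nat (y0 choose Suc r)"
  proof (cases "r \<le> y0")
    case True
    hence "(of_nat y0 - of_nat r :: 'a fls) = of_nat (y0 - r)" by (simp add: of_nat_diff)
    moreover have "(of_nat ((y0 - r) * (y0 choose r)) :: 'a fls) = of_nat (Suc r * (y0 choose Suc r))"
      using choose_rec_nat[of r y0] by simp
    ultimately show ?thesis by (simp only: of_nat_mult)
  next
    case False thus ?thesis by (simp add: binomial_eq_0)
  qed
  have "of_nat (Suc r) * b (q * p + Suc r) = b (q * p) * ((of_nat y0 - of_nat r) * of_nat (y0 choose r))"
    using A by (simp only: ac_simps)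
  hence "of_nat (Suc r) * b (q * p + Suc r) = of_nat (Suc r) * (b (q * p) * of_nat (y0 choose Suc r))"
    unfolding B by (simp only: ac_simps)
  moreover have "(of_nat (Suc r) :: 'a fls) \<noteq> 0"
  proof (rule of_nat_nz)
    show "\<not> p dvd Suc r" using Suc.prems by (auto dest: dvd_imp_le)
  qed
  ultimately show ?case by simp
qed

lemma factor:
  assumes F: "\<And>n. Fp (b n)" and dg: "\<And>q r. r < p \<Longrightarrow> b (q * p + r) = b (q * p) * of_nat (y0 choose r)"
    and y0: "y0 < p" and x: "vge (x::'a fls) 1"
  shows "evs b x = (1 + x) ^ y0 * evs (\<lambda>q. b (q * p)) (x ^ p)"
proof -
  define b' where "b' q = b (q * p)" for q
  have I: "intg b" by (rule Fp_intg) (rule F)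
  have I': "intg b'" unfolding b'_def by (rule Fp_intg) (rule F)
  have xp: "vge (x ^ p) 1" using vge_mono[OF vge_power1[OF x, of p], of 1] p_pos by simp
  define P where "P = (1 + x) ^ y0"
  have P: "P = (\<Sum>r<p. of_nat (y0 choose r) * x ^ r)"
  proof -
    have "P = (\<Sum>r\<le>y0. of_nat (y0 choose r) * x ^ r)"
      unfolding P_def using binomial_ring[of x 1 y0] by (simp add: add.commute)
    also have "\<dots> = (\<Sum>r<p. of_nat (y0 choose r) * x ^ r)"
      by (rule sum.mono_neutral_left) (use y0 in \<open>auto simp: binomial_eq_0\<close>)
    finally show ?thesis .
  qed
  have vP: "vge P 0" unfolding P_def by (rule vge_power0[OF vge_add[OF vge_one vge_mono[OF x]]]) simp
  show ?thesis unfolding P_def[symmetric] b'_def[symmetric]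
  proof (rule evs_eqI[OF I x])
    fix N
    have reg: "sum (\<lambda>n. b n * x ^ n) {..<N * p} = P * sum (\<lambda>q. b' q * (x ^ p) ^ q) {..<N}"
    proof -
      have "sum (\<lambda>n. b n * x ^ n) {..<N * p} = (\<Sum>q<N. \<Sum>r<p. b (q * p + r) * x ^ (q * p + r))"
        by (rule sum_regroup)
      also have "\<dots> = (\<Sum>q<N. b' q * (x ^ p) ^ q * (\<Sum>r<p. of_nat (y0 choose r) * x ^ r))"
      proof (intro sum.cong refl)
        fix q
        show "(\<Sum>r<p. b (q * p + r) * x ^ (q * p + r)) = b' q * (x ^ p) ^ q * (\<Sum>r<p. of_nat (y0 choose r) * x ^ r)"
          unfolding sum_distrib_left
        proof (intro sum.cong refl)
          fix r assume "r \<in> {..<p}"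
          hence d1: "b (q * p + r) = b' q * of_nat (y0 choose r)" using dg[of r q] unfolding b'_def by simp
          have d2: "x ^ (q * p + r) = (x ^ p) ^ q * x ^ r"
            by (simp only: power_add power_mult[symmetric] mult.commute)
          show "b (q * p + r) * x ^ (q * p + r) = b' q * (x ^ p) ^ q * (of_nat (y0 choose r) * x ^ r)"
            unfolding d1 d2 by (simp only: mult_ac)
        qed
      qed
      also have "\<dots> = (\<Sum>q<N. b' q * (x ^ p) ^ q) * P" unfolding P by (simp only: sum_distrib_right)
      finally show ?thesis by (simp only: mult.commute)
    qed
    have NP: "N \<le> N * p" using p_pos by simp
    have t1: "vge (sum (\<lambda>n. b n * x ^ n) {..<N * p} - sum (\<lambda>n. b n * x ^ n) {..<N}) (int N)"
      by (rule tail_poly[OF _ x NP]) (use I in \<open>simp add: intg_def\<close>)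
    have t2: "vge (sum (\<lambda>q. b' q * (x ^ p) ^ q) {..<N} - evs b' (x ^ p)) (int N)"
      by (rule evs_trunc[OF I' xp])
    have t3: "vge (P * (sum (\<lambda>q. b' q * (x ^ p) ^ q) {..<N} - evs b' (x ^ p))) (int N)"
      by (rule vge_mult0[OF vP t2])
    have EQ: "sum (\<lambda>n. b n * x ^ n) {..<N} - P * evs b' (x ^ p)
          = P * (sum (\<lambda>q. b' q * (x ^ p) ^ q) {..<N} - evs b' (x ^ p))
            - (sum (\<lambda>n. b n * x ^ n) {..<N * p} - sum (\<lambda>n. b n * x ^ n) {..<N})"
      using reg by (simp add: algebra_simps)
    show "vge (sum (\<lambda>n. b n * x ^ n) {..<N} - P * evs b' (x ^ p)) (int N)"
      unfolding EQ by (rule vge_diff[OF t3 t1])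
  qed
qed

lemma FE_step:
  assumes F: "\<And>n. Fp (b n)" and dg: "\<And>q r. r < p \<Longrightarrow> b (q * p + r) = b (q * p) * of_nat (y0 choose r)"
    and y0: "y0 < p" and FE: "FE b d m" and d: "d \<ge> 1" and m: "m \<ge> 1"
  shows "FE (\<lambda>q. b (q * p)) (d * p) m"
  unfolding FE_def
proof (intro allI impI)
  fix a c assume a: "a \<ge> m" and c: "c \<ge> m"
  define b' where "b' q = b (q * p)" for q
  define x where "x = (fls_X :: 'a fls) ^ (d * a)"
  define z where "z = (fls_X :: 'a fls) ^ (d * c)"
  have da: "d * a \<ge> 1" using a m d by (simp add: Suc_le_eq)
  have dc: "d * c \<ge> 1" using c m d by (simp add: Suc_le_eq)
  have vx: "vge x 1" unfolding x_def by (rule vge_mono[OF vge_X_power]) (use da in linarith)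
  have vz: "vge z 1" unfolding z_def by (rule vge_mono[OF vge_X_power]) (use dc in linarith)
  define w where "w = (1 + x) * (1 + z) - 1"
  have vw: "vge w 1" unfolding w_def
  proof -
    have "(1 + x) * (1 + z) - 1 = x + z + x * z" by (simp add: algebra_simps)
    moreover have "vge (x * z) 1" using vge_mono[OF vge_mult[OF vx vz], of 1] by simp
    ultimately show "vge ((1 + x) * (1 + z) - 1) 1" using vge_add[OF vge_add[OF vx vz]] by simp
  qed
  have wp: "w ^ p = (1 + x ^ p) * (1 + z ^ p) - 1"
    unfolding w_def using frob1_diff[of "(1 + x) * (1 + z)" 1] frob1[of 1 x] frob1[of 1 z] p_pos
    by (simp add: power_mult_distrib)
  have FEb: "evs b w = evs b x * evs b z"
    using FE[unfolded FE_def, rule_format, OF a c] unfolding w_def x_def z_def .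
  have fx: "evs b x = (1 + x) ^ y0 * evs b' (x ^ p)" unfolding b'_def by (rule factor[OF F dg y0 vx])
  have fz: "evs b z = (1 + z) ^ y0 * evs b' (z ^ p)" unfolding b'_def by (rule factor[OF F dg y0 vz])
  have fw: "evs b w = (1 + w) ^ y0 * evs b' (w ^ p)" unfolding b'_def by (rule factor[OF F dg y0 vw])
  have w1: "1 + w = (1 + x) * (1 + z)" unfolding w_def by simp
  have nz: "((1 + x) * (1 + z)) ^ y0 \<noteq> 0"
    using Uone_subdeg(1)[of "1 + x"] Uone_subdeg(1)[of "1 + z"] vx vz by simp
  have "((1 + x) * (1 + z)) ^ y0 * evs b' (w ^ p) = ((1 + x) * (1 + z)) ^ y0 * (evs b' (x ^ p) * evs b' (z ^ p))"
  proof -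
    have "((1 + x) * (1 + z)) ^ y0 * evs b' (w ^ p) = evs b w" unfolding fw w1 ..
    also have "\<dots> = evs b x * evs b z" by (rule FEb)
    also have "\<dots> = ((1 + x) * (1 + z)) ^ y0 * (evs b' (x ^ p) * evs b' (z ^ p))"
      unfolding fx fz by (simp only: power_mult_distrib mult_ac)
    finally show ?thesis .
  qed
  hence "evs b' (w ^ p) = evs b' (x ^ p) * evs b' (z ^ p)" by (rule mult_left_cancel[OF nz, THEN iffD1])
  moreover have "x ^ p = fls_X ^ (d * p * a)" "z ^ p = fls_X ^ (d * p * c)"
    unfolding x_def z_def by (simp_all add: power_mult[symmetric] algebra_simps)
  ultimately show "evs (\<lambda>q. b (q * p)) ((1 + fls_X ^ (d * p * a)) * (1 + fls_X ^ (d * p * c)) - 1) =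
       evs (\<lambda>q. b (q * p)) (fls_X ^ (d * p * a)) * evs (\<lambda>q. b (q * p)) (fls_X ^ (d * p * c))"
    using wp unfolding b'_def by simp
qed

end


context cp begin

lemma Yk_Suc: "Yk b (Suc k) = dig (b 1) + p * Yk (\<lambda>q. b (q * p)) k"
proof -
  have "Yk b (Suc k) = dig (b (p ^ 0)) * p ^ 0 + (\<Sum>e<k. dig (b (p ^ Suc e)) * p ^ Suc e)"
    unfolding Yk_def by (rule sum.lessThan_Suc_shift)
  also have "(\<Sum>e<k. dig (b (p ^ Suc e)) * p ^ Suc e) = p * (\<Sum>e<k. dig (b (p ^ e * p)) * p ^ e)"
    unfolding sum_distrib_left by (intro sum.cong refl) (simp add: power_Suc2 mult_ac)
  finally show ?thesis unfolding Yk_def by simp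
qed

lemma descent:
  assumes m: "m \<ge> 1"
  shows "\<forall>b d. (\<forall>n. Fp (b n)) \<longrightarrow> b 0 = 1 \<longrightarrow> FE b d m \<longrightarrow> d \<ge> 1 \<longrightarrow>
           (\<forall>x L. L \<ge> 1 \<longrightarrow> vge x L \<longrightarrow> vge (evs b x - (1 + x) ^ Yk b k) (int (p ^ k) * L))"
proof (induction k)
  case 0
  show ?case
  proof (intro allI impI)
    fix b :: "nat \<Rightarrow> 'a fls" and d :: nat and x :: "'a fls" and L :: int
    assume F: "\<forall>n. Fp (b n)" and b0: "b 0 = 1" and L: "L \<ge> 1" and x: "vge x L"
    have I: "intg b" by (rule Fp_intg) (use F in simp)
    have x1: "vge x 1" using vge_mono[OF x L] .
    have t1: "vge (sum (\<lambda>n. b n * x ^ n) {..<nat L} - evs b x) L"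
      using evs_trunc[OF I x1, of "nat L"] L by simp
    have t2: "vge (sum (\<lambda>n. b n * x ^ n) {..<nat L} - sum (\<lambda>n. b n * x ^ n) {..<1}) L"
    proof (rule sum_tail_vge)
      fix n :: nat assume n: "1 \<le> n"
      have "vge (b n * x ^ n) (0 + int n * L)" by (rule vge_mult[OF Fp_vge0 vge_power[OF x]]) (use F in simp)
      moreover have "L \<le> 0 + int n * L" using n L by (simp add: mult_le_cancel_right1)
      ultimately show "vge (b n * x ^ n) L" by (rule vge_mono)
    next
      show "1 \<le> nat L" using L by simp
    qed
    have "sum (\<lambda>n. b n * x ^ n) {..<1} = 1" using b0 by simp
    hence "evs b x - 1 = (sum (\<lambda>n. b n * x ^ n) {..<nat L} - sum (\<lambda>n. b n * x ^ n) {..<1})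
             - (sum (\<lambda>n. b n * x ^ n) {..<nat L} - evs b x)" by simp
    hence "vge (evs b x - 1) L" using vge_diff[OF t2 t1] by simp
    thus "vge (evs b x - (1 + x) ^ Yk b 0) (int (p ^ 0) * L)" by (simp add: Yk_def)
  qed
next
  case (Suc k)
  show ?case
  proof (intro allI impI)
    fix b :: "nat \<Rightarrow> 'a fls" and d :: nat and x :: "'a fls" and L :: int
    assume F0: "\<forall>n. Fp (b n)" and b0: "b 0 = 1" and FE: "FE b d m" and d: "d \<ge> 1" and L: "L \<ge> 1" and x: "vge x L"
    have F: "Fp (b n)" for n using F0 by simp
    have rec: "of_nat (Suc i) * b (Suc i) = (b 1 - of_nat i) * b i" for i by (rule recursion[OF F b0 FE d m])
    define y0 where "y0 = dig (b 1)"
    have y0: "b 1 = of_nat y0" "y0 < p" using dig[OF F[of 1]] y0_def by auto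
    have dg: "b (q * p + r) = b (q * p) * of_nat (y0 choose r)" if "r < p" for q r
      by (rule dig_structure[OF rec y0 that])
    define b' where "b' q = b (q * p)" for q
    have F': "\<forall>n. Fp (b' n)" unfolding b'_def using F by simp
    have b'0: "b' 0 = 1" unfolding b'_def using b0 by simp
    have FE': "FE b' (d * p) m" unfolding b'_def by (rule FE_step[OF F dg y0(2) FE d m])
    have d': "d * p \<ge> 1" using d p_pos by (simp add: Suc_le_eq)
    have IH: "\<forall>x L. L \<ge> 1 \<longrightarrow> vge x L \<longrightarrow> vge (evs b' x - (1 + x) ^ Yk b' k) (int (p ^ k) * L)"
      using Suc.IH F' b'0 FE' d' by blast
    have x1: "vge x 1" using vge_mono[OF x L] .
    have fac: "evs b x = (1 + x) ^ y0 * evs b' (x ^ p)" unfolding b'_def by (rule factor[OF F dg y0(2) x1])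
    have xp: "vge (x ^ p) (int p * L)" by (rule vge_power[OF x])
    have p1: "1 \<le> int p" using p_pos by simp
    have "1 * 1 \<le> int p * L" using p1 L by (intro mult_mono) auto
    hence pL: "int p * L \<ge> 1" by simp
    have ih: "vge (evs b' (x ^ p) - (1 + x ^ p) ^ Yk b' k) (int (p ^ k) * (int p * L))"
      using IH pL xp by blast
    have Y: "Yk b (Suc k) = y0 + p * Yk b' k" unfolding Yk_Suc y0_def b'_def ..
    have pw: "(1 + x) ^ Yk b (Suc k) = (1 + x) ^ y0 * (1 + x ^ p) ^ Yk b' k"
      unfolding Y power_add power_mult using frob1[of 1 x] p_pos by simp
    have "evs b x - (1 + x) ^ Yk b (Suc k) = (1 + x) ^ y0 * (evs b' (x ^ p) - (1 + x ^ p) ^ Yk b' k)"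
      unfolding fac pw by (simp add: right_diff_distrib)
    moreover have "vge ((1 + x) ^ y0 * (evs b' (x ^ p) - (1 + x ^ p) ^ Yk b' k)) (int (p ^ k) * (int p * L))"
      by (rule vge_mult0[OF vge_power0[OF vge_add[OF vge_one vge_mono[OF x1]]] ih]) simp
    moreover have "int (p ^ k) * (int p * L) = int (p ^ Suc k) * L" by (simp add: mult_ac)
    ultimately show "vge (evs b x - (1 + x) ^ Yk b (Suc k)) (int (p ^ Suc k) * L)" by (simp only:)
  qed
qed

lemma Yk_bounds:
  assumes F: "\<And>n. Fp (b n)"
  shows "Yk b n < p ^ n" "Yk b (Suc n) mod p ^ n = Yk b n"
proof -
  have dl: "dig (b e) < p" for e using dig(1)[OF F] .
  have YS: "Yk b (Suc n) = Yk b n + dig (b (p ^ n)) * p ^ n" for n unfolding Yk_def by simp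
  show lt: "Yk b n < p ^ n" for n
  proof (induction n)
    case 0 thus ?case by (simp add: Yk_def)
  next
    case (Suc n)
    have "dig (b (p ^ n)) * p ^ n \<le> (p - 1) * p ^ n" using dl[of "p ^ n"] by (intro mult_le_mono1) simp
    moreover have "p ^ n + (p - 1) * p ^ n = p ^ Suc n" using p_pos by (cases p) auto
    ultimately show ?case using Suc.IH YS[of n] by linarith
  qed
  show "Yk b (Suc n) mod p ^ n = Yk b n" unfolding YS using lt[of n] by simp
qed

end


lemma series_conv_diff:
  assumes "series_conv w (s::'a::field fls)" "series_conv v t"
  shows "series_conv (\<lambda>n. w n - v n) (s - t)"
  unfolding series_conv_def
proof
  fix N
  obtain M1 where M1: "\<forall>m\<ge>M1. vge (sum w {..<m} - s) N" using assms(1) unfolding series_conv_def by blast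
  obtain M2 where M2: "\<forall>m\<ge>M2. vge (sum v {..<m} - t) N" using assms(2) unfolding series_conv_def by blast
  show "\<exists>M. \<forall>m\<ge>M. vge (sum (\<lambda>n. w n - v n) {..<m} - (s - t)) N"
  proof (intro exI[of _ "max M1 M2"] allI impI)
    fix m assume "max M1 M2 \<le> m"
    hence "vge (sum w {..<m} - s) N" "vge (sum v {..<m} - t) N" using M1 M2 by auto
    from vge_diff[OF this]
    show "vge (sum (\<lambda>n. w n - v n) {..<m} - (s - t)) N" by (simp add: sum_subtractf algebra_simps)
  qed
qed

context cp begin

lemma series_conv_frob:
  assumes "series_conv w (s::'a fls)" shows "series_conv (\<lambda>n. w n ^ p) (s ^ p)"
  unfolding series_conv_def
proof
  fix N :: int
  define N' where "N' = max N 0"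
  obtain M where M: "\<forall>m\<ge>M. vge (sum w {..<m} - s) N'" using assms unfolding series_conv_def by blast
  show "\<exists>M. \<forall>m\<ge>M. vge (sum (\<lambda>n. w n ^ p) {..<m} - s ^ p) N"
  proof (intro exI[of _ M] allI impI)
    fix m assume "M \<le> m"
    hence "vge ((sum w {..<m} - s) ^ p) (int p * N')" using M vge_power by blast
    moreover have "N \<le> int p * N'"
    proof -
      have "1 * N' \<le> int p * N'" by (rule mult_right_mono) (use p_pos in \<open>auto simp: N'_def\<close>)
      thus ?thesis unfolding N'_def by simp
    qed
    ultimately have "vge ((sum w {..<m} - s) ^ p) N" by (rule vge_mono)
    thus "vge (sum (\<lambda>n. w n ^ p) {..<m} - s ^ p) N" by (simp add: frob1_diff frob1_sum)
  qed
qed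

lemma Lambda_one:
  assumes f: "f \<in> (Lambda_set :: ('a fls \<Rightarrow> 'a fls) set)" shows "f 1 = 1"
proof -
  have U1: "(1::'a fls) \<in> Uone" by (simp add: Uone_iff)
  have m: "\<forall>u\<in>Uone. \<forall>v\<in>Uone. f (u * v) = f u * f v" and fU: "f \<in> Uone \<rightarrow> Uone"
    using f unfolding Lambda_set_def by auto
  have "f 1 = f 1 * f 1" using m U1 by (metis mult_1)
  moreover have "f 1 \<noteq> 0"
  proof -
    have "f 1 \<in> Uone" using fU U1 by blast
    thus ?thesis using Uone_subdeg(1) by (simp add: Uone_iff)
  qed
  ultimately show ?thesis by (metis mult_cancel_left2)
qed

lemma Lambda_pow:
  assumes f: "f \<in> (Lambda_set :: ('a fls \<Rightarrow> 'a fls) set)" and u: "u \<in> Uone"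
  shows "f (u ^ n) = f u ^ n"
proof (induction n)
  case 0 thus ?case using Lambda_one[OF f] by simp
next
  case (Suc n)
  have m: "\<forall>u\<in>Uone. \<forall>v\<in>Uone. f (u * v) = f u * f v" using f unfolding Lambda_set_def by auto
  have "u ^ n \<in> Uone" using Uone_pow u by (simp add: Uone_iff)
  thus ?case using m u Suc.IH by simp
qed

lemma upow_pow:
  assumes y: "y \<in> Zp p" and u: "vge ((u::'a fls) - 1) 1"
  shows "upow p y (u ^ n) = upow p y u ^ n"
proof (induction n)
  case 0
  have "upow p y (1::'a fls) = 1" by (rule upow_eqI[OF y]) simp_all
  thus ?case by simp
next
  case (Suc n) thus ?case using upow_mult_u[OF y u Uone_pow[OF u]] by simp
qed

end


context cp begin

lemma surj_Lambda:
  assumes f: "f \<in> (Lambda_set :: ('a fls \<Rightarrow> 'a fls) set)"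
  shows "\<exists>y\<in>Zp p. f = restrict (upow p y) Uone"
proof -
  have fext: "f \<in> extensional Uone" and fU: "f \<in> Uone \<rightarrow> Uone" and la: "locally_analytic_U f"
    and fm: "\<forall>u\<in>Uone. \<forall>v\<in>Uone. f (u * v) = f u * f v"
    using f unfolding Lambda_set_def by auto
  have U1: "(1::'a fls) \<in> Uone" by (simp add: Uone_iff)
  obtain \<rho> where \<rho>: "\<rho> \<in> RK" "\<rho> \<noteq> 0" "ballK 1 \<rho> \<subseteq> Uone" "analytic_on_ball f 1 \<rho>"
    using la U1 unfolding locally_analytic_U_def by blast
  obtain c where c: "tends0 c" "\<And>u. u \<in> ballK 1 \<rho> \<Longrightarrow> series_conv (\<lambda>n. c n * ((u - 1) / \<rho>) ^ n) (f u)"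
    using \<rho>(4) unfolding analytic_on_ball_def by blast
  define mi where "mi = fls_subdegree \<rho>"
  have mi0: "mi \<ge> 0" using \<rho>(1,2) unfolding RK_iff mi_def vge_def by auto
  have mi1: "mi \<ge> 1"
  proof (rule ccontr)
    assume "\<not> mi \<ge> 1"
    hence "mi = 0" using mi0 by simp
    hence "(0::'a fls) \<in> ballK 1 \<rho>" unfolding ballK_def RK_iff mi_def vge_def by simp
    hence "(0::'a fls) \<in> Uone" using \<rho>(3) by blast
    hence "vge (-1 :: 'a fls) 1" by (simp add: Uone_iff)
    thus False unfolding vge_def by simp
  qed
  have vrho: "vge \<rho> mi" unfolding mi_def vge_def by simp
  have inball: "1 + \<rho> * t \<in> ballK 1 \<rho>" if t: "vge t 0" for t
  proof -
    have a: "vge (\<rho> * t) mi" using vge_mult[OF vrho t] by simp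
    have "vge (1 + \<rho> * t) 0" by (rule vge_add[OF vge_one vge_mono[OF a mi0]])
    thus ?thesis using a unfolding ballK_def RK_iff mi_def by simp
  qed
  have ser: "series_conv (\<lambda>n. c n * t ^ n) (f (1 + \<rho> * t))" if t: "vge t 0" for t
    using c(2)[OF inball[OF t]] \<rho>(2) by simp
  have inU: "1 + \<rho> * t \<in> Uone" if t: "vge t 0" for t using inball[OF t] \<rho>(3) by blast
  (* Frobenius identity for the coefficients *)
  define e where "e n = c n ^ p - c n * (\<rho> ^ (p - 1)) ^ n" for n
  have te: "tends0 e" unfolding tends0_def
  proof
    fix N :: int
    define N' where "N' = max N 0"
    obtain M where M: "\<forall>n\<ge>M. vge (c n) N'" using c(1) unfolding tends0_def by blast
    have vr: "vge (\<rho> ^ (p - 1)) 0" using vge_power0 \<rho>(1) unfolding RK_iff by blast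
    show "\<exists>M. \<forall>n\<ge>M. vge (e n) N"
    proof (intro exI[of _ M] allI impI)
      fix n assume "M \<le> n"
      hence cn: "vge (c n) N'" using M by blast
      have a: "vge (c n ^ p) (int p * N')" by (rule vge_power[OF cn])
      have "N' \<le> int p * N'"
      proof -
        have "1 * N' \<le> int p * N'" by (rule mult_right_mono) (use p_pos in \<open>auto simp: N'_def\<close>)
        thus ?thesis by simp
      qed
      hence a': "vge (c n ^ p) N'" using vge_mono[OF a] by blast
      have b: "vge (c n * (\<rho> ^ (p - 1)) ^ n) N'" by (rule vge_mult0'[OF cn vge_power0[OF vr]])
      have "vge (e n) N'" unfolding e_def by (rule vge_diff[OF a' b])
      thus "vge (e n) N" using vge_mono N'_def by fastforce
    qed
  qed
  have e0: "e n = 0" for n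
  proof (rule identity_general[OF te])
    fix K :: nat
    define t where "t = (fls_X :: 'a fls) ^ K"
    have t: "vge t 0" unfolding t_def by (rule vge_mono[OF vge_X_power]) simp
    have s1: "series_conv (\<lambda>n. (c n * t ^ n) ^ p) (f (1 + \<rho> * t) ^ p)"
      by (rule series_conv_frob[OF ser[OF t]])
    define t' where "t' = \<rho> ^ (p - 1) * t ^ p"
    have t': "vge t' 0" unfolding t'_def using vge_mult0[OF vge_power0 vge_power0[OF t]] \<rho>(1) unfolding RK_iff by blast
    have s2: "series_conv (\<lambda>n. c n * t' ^ n) (f (1 + \<rho> * t'))" by (rule ser[OF t'])
    have eq1: "(1 + \<rho> * t) ^ p = 1 + \<rho> * t'"
    proof -
      have "(1 + \<rho> * t) ^ p = 1 + (\<rho> * t) ^ p" using frob1[of 1 "\<rho> * t"] by simp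
      also have "(\<rho> * t) ^ p = \<rho> * t'"
      proof -
        have "\<rho> ^ p = \<rho> * \<rho> ^ (p - 1)" using p_pos by (cases p) auto
        thus ?thesis unfolding t'_def by (simp add: power_mult_distrib mult.assoc)
      qed
      finally show ?thesis .
    qed
    have "f (1 + \<rho> * t') = f (1 + \<rho> * t) ^ p"
      using Lambda_pow[OF f inU[OF t], of p] eq1 by simp
    hence "series_conv (\<lambda>n. (c n * t ^ n) ^ p - c n * t' ^ n) 0"
      using series_conv_diff[OF s1 s2] by simp
    moreover have "(c n * t ^ n) ^ p - c n * t' ^ n = e n * (fls_X ^ (K * p)) ^ n" for n
      unfolding e_def t'_def t_def
      by (simp add: power_mult_distrib power_mult[symmetric] algebra_simps)
    ultimately have "series_conv (\<lambda>n. e n * (fls_X ^ (K * p)) ^ n) 0" by simp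
    moreover have "K * p \<ge> K" using p_pos by simp
    ultimately show "\<exists>D\<ge>K. series_conv (\<lambda>n. e n * (fls_X ^ D) ^ n) 0" by blast
  qed
  define b where "b n = c n / \<rho> ^ n" for n
  have bF: "Fp (b n)" for n
  proof (rule roots_Fp)
    have "c n ^ p = c n * (\<rho> ^ (p - 1)) ^ n" using e0[of n] unfolding e_def by simp
    moreover have "(\<rho> ^ n) ^ p = \<rho> ^ n * (\<rho> ^ (p - 1)) ^ n"
    proof -
      have "(\<rho> ^ n) ^ p = (\<rho> ^ n) ^ (1 + (p - 1))" using p_pos by simp
      thus ?thesis by (simp only: power_add power_one_right power_mult[symmetric] mult.commute)
    qed
    moreover have "\<rho> ^ (p - 1) \<noteq> 0" using \<rho>(2) by simp
    ultimately show "b n ^ p = b n" unfolding b_def using \<rho>(2) by (simp add: power_divide)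
  qed
  have I: "intg b" by (rule Fp_intg[OF bF])
  have fev: "f (1 + x) = evs b x" if x: "vge x mi" for x
  proof -
    define t where "t = x / \<rho>"
    have t: "vge t 0"
    proof (cases "x = 0")
      case False thus ?thesis using x \<rho>(2) unfolding t_def vge_def mi_def by (simp add: fls_subdegree_divide)
    qed (simp add: t_def)
    have xt: "\<rho> * t = x" unfolding t_def using \<rho>(2) by simp
    have x1: "vge x 1" using vge_mono[OF x mi1] .
    have "series_conv (\<lambda>n. c n * t ^ n) (f (1 + x))" using ser[OF t] xt by simp
    moreover have "c n * t ^ n = b n * x ^ n" for n unfolding b_def t_def by (simp add: power_divide)
    ultimately have sc: "series_conv (\<lambda>n. b n * x ^ n) (f (1 + x))" by simp
    have W: "vge (b n * x ^ n) (int n)" for n by (rule vge_mult0[OF Fp_vge0[OF bF] vge_power1[OF x1]])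
    have "\<forall>N. vge (sum (\<lambda>n. b n * x ^ n) {..<N} - f (1 + x)) (int N)"
      using sc series_conv_iff_trunc[OF W] by blast
    hence "evs b x = f (1 + x)" using evs_eqI[OF I x1] by blast
    thus ?thesis by simp
  qed
  have b0: "b 0 = 1"
  proof -
    have "evs b 0 = b 0"
    proof (rule evs_eqI[OF I])
      fix N
      show "vge (sum (\<lambda>n. b n * 0 ^ n) {..<N} - b 0) (int N)"
      proof (cases N)
        case 0 thus ?thesis using Fp_vge0[OF bF] by simp
      next
        case (Suc N')
        have "sum (\<lambda>n. b n * 0 ^ n) {..<N} = b 0" unfolding Suc by (subst sum.lessThan_Suc_shift) simp
        thus ?thesis by simp
      qed
    qed simp
    moreover have "f (1 + 0) = evs b 0" by (rule fev) simp
    ultimately show ?thesis using Lambda_one[OF f] by simp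
  qed
  define m where "m = nat mi"
  have m1: "m \<ge> 1" using mi1 unfolding m_def by simp
  have mim: "mi = int m" using mi0 unfolding m_def by simp
  have FE: "FE b 1 m" unfolding FE_def
  proof (intro allI impI)
    fix a c' assume a: "a \<ge> m" and c': "c' \<ge> m"
    define x where "x = (fls_X :: 'a fls) ^ (1 * a)"
    define z where "z = (fls_X :: 'a fls) ^ (1 * c')"
    have vx: "vge x mi" unfolding x_def mim by (rule vge_mono[OF vge_X_power]) (use a in simp)
    have vz: "vge z mi" unfolding z_def mim by (rule vge_mono[OF vge_X_power]) (use c' in simp)
    have vxz: "vge (x * z) mi" using vge_mono[OF vge_mult[OF vx vz]] mi0 by simp
    have "(1 + x) * (1 + z) - 1 = x + z + x * z" by (simp add: algebra_simps)
    hence vw: "vge ((1 + x) * (1 + z) - 1) mi" using vge_add[OF vge_add[OF vx vz] vxz] by simp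
    have uxU: "1 + x \<in> Uone" "1 + z \<in> Uone" using vx vz mi1 vge_mono by (auto simp: Uone_iff)
    have "evs b ((1 + x) * (1 + z) - 1) = f (1 + ((1 + x) * (1 + z) - 1))" using fev[OF vw] by simp
    also have "\<dots> = f ((1 + x) * (1 + z))" by simp
    also have "\<dots> = f (1 + x) * f (1 + z)" using fm uxU by blast
    also have "\<dots> = evs b x * evs b z" using fev[OF vx] fev[OF vz] by simp
    finally show "evs b ((1 + fls_X ^ (1 * a)) * (1 + fls_X ^ (1 * c')) - 1) = evs b (fls_X ^ (1 * a)) * evs b (fls_X ^ (1 * c'))"
      unfolding x_def z_def .
  qed
  have D: "vge (evs b x - (1 + x) ^ Yk b k) (int (p ^ k) * L)" if "L \<ge> 1" "vge x L" for k x L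
    using descent[OF m1, of k] bF b0 FE that by auto
  define y where "y n = int (Yk b n)" for n
  have yZ: "y \<in> Zp p" unfolding Zp_def y_def
  proof (intro CollectI allI conjI)
    fix n
    show "0 \<le> int (Yk b n)" by simp
    have "int (Yk b n) < int (p ^ n)" using Yk_bounds(1)[OF bF, where n=n] by simp
    thus "int (Yk b n) < int p ^ n" by simp
    have "int (Yk b (Suc n) mod p ^ n) = int (Yk b n)" using Yk_bounds(2)[OF bF, where n=n] by simp
    thus "int (Yk b (Suc n)) mod int p ^ n = int (Yk b n)" by (simp add: of_nat_mod)
  qed
  have near: "f u = upow p y u" if u: "vge (u - 1) mi" for u
  proof -
    have u1: "vge (u - 1) 1" using vge_mono[OF u mi1] .
    have K: "vge (f u - upow p y u) (int k)" for k
    proof -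
      have a: "vge (evs b (u - 1) - u ^ Yk b k) (int (p ^ k) * mi)" using D[OF mi1 u, of k] by simp
      have "int k \<le> int (p ^ k) * mi"
      proof -
        have "int k \<le> int (p ^ k)" using n_le_pow[of k] by linarith
        also have "\<dots> = int (p ^ k) * 1" by simp
        also have "\<dots> \<le> int (p ^ k) * mi" using mi1 by (intro mult_left_mono) auto
        finally show ?thesis .
      qed
      hence a': "vge (f u - u ^ Yk b k) (int k)" using vge_mono[OF a] fev[OF u] by simp
      have "vge (upow p y u - u ^ nat (y k)) (int k)" by (rule upow_approx[OF yZ u1])
      hence "vge (upow p y u - u ^ Yk b k) (int k)" using y_def by simp
      hence "vge (u ^ Yk b k - upow p y u) (int k)" by (subst vge_sym)
      thus ?thesis using vge_trans[OF a'] by blast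
    qed
    have "vge (f u - upow p y u) N" for N
    proof -
      have "N \<le> int (nat N)" by simp
      thus ?thesis by (rule vge_mono[OF K])
    qed
    thus ?thesis using vge_all[of "f u - upow p y u"] by simp
  qed
  have allU: "f u = upow p y u" if u: "u \<in> Uone" for u
  proof -
    have u1: "vge (u - 1) 1" using u by (simp add: Uone_iff)
    define K where "K = p ^ m"
    have "u ^ K - 1 = (u - 1) ^ K" unfolding K_def using frob_diff[of u 1 m] by simp
    moreover have "vge ((u - 1) ^ K) (int K)" by (rule vge_power1[OF u1])
    moreover have "mi \<le> int K" unfolding K_def mim using n_le_pow[of m] by linarith
    ultimately have "vge (u ^ K - 1) mi" using vge_mono[of "(u - 1) ^ K" "int K" mi] by simp
    hence "f (u ^ K) = upow p y (u ^ K)" by (rule near)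
    hence "f u ^ K = upow p y u ^ K" using Lambda_pow[OF f u] upow_pow[OF yZ u1] by simp
    hence "(f u - upow p y u) ^ K = 0" unfolding K_def by (simp add: frob_diff)
    thus ?thesis by simp
  qed
  have "f = restrict (upow p y) Uone"
  proof
    fix u show "f u = restrict (upow p y) Uone u"
      using allU fext by (cases "u \<in> Uone") (auto simp: extensional_def)
  qed
  thus ?thesis using yZ by blast
qed

end


context cp begin

lemma Zp_group: "group (Zp_grp p)"
proof (rule groupI)
  fix x y z assume x: "x \<in> carrier (Zp_grp p)" and y: "y \<in> carrier (Zp_grp p)" and z: "z \<in> carrier (Zp_grp p)"
  show "x \<otimes>\<^bsub>Zp_grp p\<^esub> y \<in> carrier (Zp_grp p)" using Zp_closed[OF _ _ p_pos] x y by (simp add: Zp_grp_def)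
  show "x \<otimes>\<^bsub>Zp_grp p\<^esub> y \<otimes>\<^bsub>Zp_grp p\<^esub> z = x \<otimes>\<^bsub>Zp_grp p\<^esub> (y \<otimes>\<^bsub>Zp_grp p\<^esub> z)"
    by (simp add: Zp_grp_def fun_eq_iff mod_add_left_eq mod_add_right_eq add.assoc)
next
  show "\<one>\<^bsub>Zp_grp p\<^esub> \<in> carrier (Zp_grp p)" using p_pos by (simp add: Zp_grp_def Zp_def)
next
  fix x assume x: "x \<in> carrier (Zp_grp p)"
  hence xZ: "x \<in> Zp p" by (simp add: Zp_grp_def)
  show "\<one>\<^bsub>Zp_grp p\<^esub> \<otimes>\<^bsub>Zp_grp p\<^esub> x = x"
    using zp_nonneg[OF xZ] zp_less[OF xZ] by (simp add: Zp_grp_def fun_eq_iff)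
  define y where "y n = (- x n) mod int p ^ n" for n
  have yZ: "y \<in> Zp p" unfolding Zp_def
  proof (intro CollectI allI conjI)
    fix n
    show "0 \<le> y n" "y n < int p ^ n" using p_pos by (simp_all add: y_def)
    have "y (Suc n) mod int p ^ n = (- x (Suc n)) mod int p ^ n"
      unfolding y_def by (simp add: mod_mod_cancel le_imp_power_dvd)
    also have "\<dots> = (- (x (Suc n) mod int p ^ n)) mod int p ^ n" by (simp add: mod_minus_eq)
    also have "\<dots> = y n" using xZ unfolding Zp_def y_def by simp
    finally show "y (Suc n) mod int p ^ n = y n" .
  qed
  have "y \<otimes>\<^bsub>Zp_grp p\<^esub> x = \<one>\<^bsub>Zp_grp p\<^esub>"
    by (simp add: Zp_grp_def y_def fun_eq_iff mod_add_left_eq)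
  thus "\<exists>y\<in>carrier (Zp_grp p). y \<otimes>\<^bsub>Zp_grp p\<^esub> x = \<one>\<^bsub>Zp_grp p\<^esub>"
    using yZ by (intro bexI[of _ y]) (simp_all add: Zp_grp_def)
qed

abbreviation H :: "(nat \<Rightarrow> int) \<Rightarrow> 'a fls \<Rightarrow> 'a fls" where
  "H y \<equiv> restrict (upow p y) Uone"

lemma H_mult: assumes "y \<in> Zp p" "z \<in> Zp p"
  shows "H (\<lambda>n. (y n + z n) mod int p ^ n) = restrict (\<lambda>u. H y u * H z u) Uone"
proof
  fix u :: "'a fls"
  show "H (\<lambda>n. (y n + z n) mod int p ^ n) u = restrict (\<lambda>u. H y u * H z u) Uone u"
    using upow_add_y[OF assms, of u] by (cases "u \<in> Uone") (simp_all add: Uone_iff)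
qed

lemma Lambda_group: "group (Lambda_grp :: ('a fls \<Rightarrow> 'a fls) monoid)"
proof (rule groupI)
  fix f g k assume f: "f \<in> carrier (Lambda_grp :: ('a fls \<Rightarrow> 'a fls) monoid)"
    and g: "g \<in> carrier (Lambda_grp :: ('a fls \<Rightarrow> 'a fls) monoid)"
    and k: "k \<in> carrier (Lambda_grp :: ('a fls \<Rightarrow> 'a fls) monoid)"
  obtain y where y: "y \<in> Zp p" "f = H y" using surj_Lambda f by (auto simp: Lambda_grp_def)
  obtain z where z: "z \<in> Zp p" "g = H z" using surj_Lambda g by (auto simp: Lambda_grp_def)
  show "f \<otimes>\<^bsub>Lambda_grp\<^esub> g \<in> carrier (Lambda_grp :: ('a fls \<Rightarrow> 'a fls) monoid)"
    using upow_in_Lambda[OF Zp_closed[OF y(1) z(1) p_pos]] H_mult[OF y(1) z(1)] y z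
    by (simp add: Lambda_grp_def)
  show "f \<otimes>\<^bsub>Lambda_grp\<^esub> g \<otimes>\<^bsub>Lambda_grp\<^esub> k = f \<otimes>\<^bsub>Lambda_grp\<^esub> (g \<otimes>\<^bsub>Lambda_grp\<^esub> k)"
    by (simp add: Lambda_grp_def fun_eq_iff mult.assoc)
next
  have "restrict (\<lambda>u. 1) Uone = H (\<lambda>n. 0)"
  proof
    fix u :: "'a fls" show "restrict (\<lambda>u. 1) Uone u = H (\<lambda>n. 0) u"
      using upow_zero_y[of u] by (cases "u \<in> Uone") (simp_all add: Uone_iff)
  qed
  moreover have "(\<lambda>n. 0::int) \<in> Zp p" unfolding Zp_def using p_pos by simp
  ultimately show "\<one>\<^bsub>Lambda_grp\<^esub> \<in> carrier (Lambda_grp :: ('a fls \<Rightarrow> 'a fls) monoid)"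
    using upow_in_Lambda by (simp add: Lambda_grp_def)
next
  fix f assume f: "f \<in> carrier (Lambda_grp :: ('a fls \<Rightarrow> 'a fls) monoid)"
  hence fe: "f \<in> extensional Uone" by (simp add: Lambda_grp_def Lambda_set_def)
  show "\<one>\<^bsub>Lambda_grp\<^esub> \<otimes>\<^bsub>Lambda_grp\<^esub> f = f"
  proof
    fix u show "(\<one>\<^bsub>Lambda_grp\<^esub> \<otimes>\<^bsub>Lambda_grp\<^esub> f) u = f u"
      using fe by (cases "u \<in> Uone") (simp_all add: Lambda_grp_def extensional_def)
  qed
  obtain y where y: "y \<in> Zp p" "f = H y" using surj_Lambda f by (auto simp: Lambda_grp_def)
  define y' where "y' n = (- y n) mod int p ^ n" for n
  have yZ: "y' \<in> Zp p" using Zp_group y(1) unfolding y'_def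
  proof -
    show "(\<lambda>n. (- y n) mod int p ^ n) \<in> Zp p" unfolding Zp_def
    proof (intro CollectI allI conjI)
      fix n
      show "0 \<le> (- y n) mod int p ^ n" "(- y n) mod int p ^ n < int p ^ n" using p_pos by simp_all
      have "(- y (Suc n)) mod int p ^ Suc n mod int p ^ n = (- y (Suc n)) mod int p ^ n"
        by (simp add: mod_mod_cancel le_imp_power_dvd)
      also have "\<dots> = (- (y (Suc n) mod int p ^ n)) mod int p ^ n" by (simp add: mod_minus_eq)
      also have "\<dots> = (- y n) mod int p ^ n" using y(1) unfolding Zp_def by simp
      finally show "(- y (Suc n)) mod int p ^ Suc n mod int p ^ n = (- y n) mod int p ^ n" .
    qed
  qed
  have s0: "(\<lambda>n. (y' n + y n) mod int p ^ n) = (\<lambda>n. 0)"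
    by (simp add: y'_def fun_eq_iff mod_add_left_eq)
  have "restrict (\<lambda>u. H y' u * H y u) Uone = restrict (\<lambda>u. 1) Uone"
  proof
    fix u :: "'a fls"
    show "restrict (\<lambda>u. H y' u * H y u) Uone u = restrict (\<lambda>u. 1) Uone u"
      using upow_add_y[OF yZ y(1), of u] upow_zero_y[of u] s0 by (cases "u \<in> Uone") (simp_all add: Uone_iff)
  qed
  hence "H y' \<otimes>\<^bsub>Lambda_grp\<^esub> f = \<one>\<^bsub>Lambda_grp\<^esub>" using y by (simp add: Lambda_grp_def)
  moreover have "H y' \<in> carrier (Lambda_grp :: ('a fls \<Rightarrow> 'a fls) monoid)"
    using upow_in_Lambda[OF yZ] by (simp add: Lambda_grp_def)
  ultimately show "\<exists>g\<in>carrier (Lambda_grp :: ('a fls \<Rightarrow> 'a fls) monoid). g \<otimes>\<^bsub>Lambda_grp\<^esub> f = \<one>\<^bsub>Lambda_grp\<^esub>"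
    by blast
qed

lemma main_iso:
  "(\<lambda>y \<in> Zp p. restrict (\<lambda>u. upow p y u :: 'a fls) Uone)
     \<in> iso (Zp_grp p) (Lambda_grp :: ('a fls \<Rightarrow> 'a fls) monoid)"
  unfolding iso_def hom_def
proof (intro CollectI conjI)
  show "(\<lambda>y \<in> Zp p. H y) \<in> carrier (Zp_grp p) \<rightarrow> carrier (Lambda_grp :: ('a fls \<Rightarrow> 'a fls) monoid)"
    using upow_in_Lambda by (auto simp: Zp_grp_def Lambda_grp_def)
  show "\<forall>x\<in>carrier (Zp_grp p). \<forall>y\<in>carrier (Zp_grp p).
          (\<lambda>y \<in> Zp p. H y) (x \<otimes>\<^bsub>Zp_grp p\<^esub> y) = (\<lambda>y \<in> Zp p. H y) x \<otimes>\<^bsub>Lambda_grp\<^esub> (\<lambda>y \<in> Zp p. H y) y"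
    using H_mult Zp_closed[OF _ _ p_pos] by (simp add: Zp_grp_def Lambda_grp_def)
  show "bij_betw (\<lambda>y \<in> Zp p. H y) (carrier (Zp_grp p)) (carrier (Lambda_grp :: ('a fls \<Rightarrow> 'a fls) monoid))"
    unfolding bij_betw_def
  proof
    show "inj_on (\<lambda>y \<in> Zp p. H y) (carrier (Zp_grp p))"
    proof (rule inj_onI)
      fix y z assume y: "y \<in> carrier (Zp_grp p)" and z: "z \<in> carrier (Zp_grp p)"
        and e: "(\<lambda>y \<in> Zp p. H y) y = (\<lambda>y \<in> Zp p. H y) z"
      have yZ: "y \<in> Zp p" and zZ: "z \<in> Zp p" using y z by (simp_all add: Zp_grp_def)
      have "H y = H z" using e yZ zZ by simp
      show "y = z"
      proof (rule upow_inj[OF yZ zZ])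
        fix u :: "'a fls" assume u: "vge (u - 1) 1"
        have "H y u = H z u" using \<open>H y = H z\<close> by simp
        thus "upow p y u = upow p z u" using u by (simp add: Uone_iff)
      qed
    qed
    show "(\<lambda>y \<in> Zp p. H y) ` carrier (Zp_grp p) = carrier (Lambda_grp :: ('a fls \<Rightarrow> 'a fls) monoid)"
    proof
      show "(\<lambda>y \<in> Zp p. H y) ` carrier (Zp_grp p) \<subseteq> carrier (Lambda_grp :: ('a fls \<Rightarrow> 'a fls) monoid)"
        using upow_in_Lambda by (auto simp: Zp_grp_def Lambda_grp_def)
      show "carrier (Lambda_grp :: ('a fls \<Rightarrow> 'a fls) monoid) \<subseteq> (\<lambda>y \<in> Zp p. H y) ` carrier (Zp_grp p)"
      proof
        fix f assume "f \<in> carrier (Lambda_grp :: ('a fls \<Rightarrow> 'a fls) monoid)"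
        then obtain y where "y \<in> Zp p" "f = H y" using surj_Lambda by (auto simp: Lambda_grp_def)
        thus "f \<in> (\<lambda>y \<in> Zp p. H y) ` carrier (Zp_grp p)" by (auto simp: Zp_grp_def)
      qed
    qed
  qed
qed

end

theorem theorem1p1:
  fixes p :: nat
  assumes "prime p" and "of_nat p = (0 :: 'a :: {field, finite})"
  shows "group (Zp_grp p) \<and> group (Lambda_grp :: ('a fls \<Rightarrow> 'a fls) monoid) \<and>
         (\<lambda>y \<in> Zp p. restrict (\<lambda>u. upow p y u :: 'a fls) Uone)
           \<in> iso (Zp_grp p) (Lambda_grp :: ('a fls \<Rightarrow> 'a fls) monoid)"
proof -
  interpret cp p "TYPE('a)" by unfold_locales (rule assms)+
  show ?thesis using Zp_group Lambda_group main_iso by blast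
qed


end
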